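(* There exist $a^*\in(0,1/10]$ and $L^*\in(0,1/6)$ with the following properties. Suppose $\Gamma_0^+$ is an $L^*$-flat arc in the upper half-wedge $V_{a^*}\cap\{y>0\}$ whose left endpoint lies on the NW face and whose right endpoint lies on the line $x=2$. Then $\mathbf{W}_+(\Gamma_0^+)$ contains an $L^*$-flat arc $\Gamma_1$ in $V_{a^*}\cap\{y>0\}$ with left endpoint on the NW face and right endpoint on the NE face, and $$\max_{(x,y)\in\Gamma_1}y<\tfrac14\min_{(x,y)\in\Gamma_0^+}y.$$ Moreover, writing $\Gamma_0^+=\{(x,f(x))\}$ and letting the endpoints of $\Gamma_1$ be $\mathbf{W}_+(x_1,f(x_1))$ and $\mathbf{W}_+(x_2,f(x_2))$, the function $\phi(x)=$ first coordinate of $\mathbf{W}_+(x,f(x))$ satisfies $\phi'(x)>1$ for all $x$ between $x_1$ and $x_2$. The analogous statements hold for $\mathbf{W}_-$ acting on an $L^*$-flat arc $\Gamma_0^-$ in the upper half-wedge with left endpoint on the line $x=2$ and right endpoint on the NE face; and, by symmetry under $y\mapsto-y$, analogous statements hold in the lower half-wedge (with $\max y$, $\min y$ replaced by $\max|y|$, $\min|y|$ and NW, NE replaced by SW, SE).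
   Context: For $x>0$, $y\in\mathbb{R}$ let $r_1^2=4+x^2+4x^2y^2$, $\Delta=((x+2)^2+8x^2y^2)((x-2)^2+8x^2y^2)$ and $\omega_\pm(x,y)=\frac{x^2-4\pm\sqrt{\Delta}}{2r_1^2}$. Let $R=\{(x,y): x>0,\ 4-4y^2-x^2y^2-8x^2y^4\ge 0\}$, $R_+=R\cap((0,2]\times\mathbb{R})$, $R_-=R\cap([2,\infty)\times\mathbb{R})$, and $\mathbf{W}_\pm(x,y)=\left(\frac{1+\omega_\pm}{1-\omega_\pm}x,\ \frac{|\omega_\pm|}{1+\omega_\pm}y\right)$ on $R_\pm$. For $0<a\le1/10$, the wedge $V_a=\{(x,y): |y|\le a,\ |y|\ge|x-2|/10\}$; its NW face is $\{y=(2-x)/10,\ 0<y\le a\}$, NE face $\{y=(x-2)/10,\ 0<y\le a\}$, SW face $\{-y=(2-x)/10,\ 0<-y\le a\}$, SE face $\{-y=(x-2)/10,\ 0<-y\le a\}$. An $L$-flat arc in $V_a$ is a graph $\{(x,f(x)):x\in I\}\subset V_a$ of an $L$-Lipschitz function $f:I\to\mathbb{R}$ on a compact interval $I$. *)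

theory Defs
  imports "HOL-Analysis.Analysis"
begin

definition r1sq :: "real \<Rightarrow> real \<Rightarrow> real" where
  "r1sq x y = 4 + x^2 + 4 * x^2 * y^2"

definition Delta :: "real \<Rightarrow> real \<Rightarrow> real" where
  "Delta x y = ((x + 2)^2 + 8 * x^2 * y^2) * ((x - 2)^2 + 8 * x^2 * y^2)"

definition omega_p :: "real \<Rightarrow> real \<Rightarrow> real" where
  "omega_p x y = (x^2 - 4 + sqrt (Delta x y)) / (2 * r1sq x y)"

definition omega_m :: "real \<Rightarrow> real \<Rightarrow> real" where
  "omega_m x y = (x^2 - 4 - sqrt (Delta x y)) / (2 * r1sq x y)"

definition regionR :: "(real \<times> real) set" where
  "regionR = {(x, y). x > 0 \<and> 4 - 4 * y^2 - x^2 * y^2 - 8 * x^2 * y^4 \<ge> 0}"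

definition regionR_p :: "(real \<times> real) set" where
  "regionR_p = regionR \<inter> ({0<..2} \<times> UNIV)"

definition regionR_m :: "(real \<times> real) set" where
  "regionR_m = regionR \<inter> ({2..} \<times> UNIV)"

text \<open>The maps W_+ and W_-, given by their formulas (the paper considers them on R_+ and R_-).\<close>
definition W_p :: "real \<times> real \<Rightarrow> real \<times> real" where
  "W_p p = (case p of (x, y) \<Rightarrow>
     ((1 + omega_p x y) / (1 - omega_p x y) * x, \<bar>omega_p x y\<bar> / (1 + omega_p x y) * y))"

definition W_m :: "real \<times> real \<Rightarrow> real \<times> real" where
  "W_m p = (case p of (x, y) \<Rightarrow>
     ((1 + omega_m x y) / (1 - omega_m x y) * x, \<bar>omega_m x y\<bar> / (1 + omega_m x y) * y))"

definition wedgeV :: "real \<Rightarrow> (real \<times> real) set" where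
  "wedgeV a = {(x, y). \<bar>y\<bar> \<le> a \<and> \<bar>y\<bar> \<ge> \<bar>x - 2\<bar> / 10}"

definition upper_half :: "real \<Rightarrow> (real \<times> real) set" where
  "upper_half a = wedgeV a \<inter> {(x, y). y > 0}"

definition lower_half :: "real \<Rightarrow> (real \<times> real) set" where
  "lower_half a = wedgeV a \<inter> {(x, y). y < 0}"

definition faceNW :: "real \<Rightarrow> (real \<times> real) set" where
  "faceNW a = {(x, y). y = (2 - x) / 10 \<and> 0 < y \<and> y \<le> a}"
definition faceNE :: "real \<Rightarrow> (real \<times> real) set" where
  "faceNE a = {(x, y). y = (x - 2) / 10 \<and> 0 < y \<and> y \<le> a}"
definition faceSW :: "real \<Rightarrow> (real \<times> real) set" where
  "faceSW a = {(x, y). - y = (2 - x) / 10 \<and> 0 < - y \<and> - y \<le> a}"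
definition faceSE :: "real \<Rightarrow> (real \<times> real) set" where
  "faceSE a = {(x, y). - y = (x - 2) / 10 \<and> 0 < - y \<and> - y \<le> a}"

definition line_x2 :: "(real \<times> real) set" where
  "line_x2 = {(x, y). x = 2}"

definition graph_on :: "(real \<Rightarrow> real) \<Rightarrow> real set \<Rightarrow> (real \<times> real) set" where
  "graph_on f I = (\<lambda>x. (x, f x)) ` I"

definition flat_arc :: "real \<Rightarrow> (real \<times> real) set \<Rightarrow> (real \<Rightarrow> real) \<Rightarrow> real \<Rightarrow> real \<Rightarrow> bool" where
  "flat_arc L A f s t \<longleftrightarrow> s \<le> t \<and> L-lipschitz_on {s..t} f \<and> graph_on f {s..t} \<subseteq> A"

definition arc_claim ::
  "(real \<times> real \<Rightarrow> real \<times> real) \<Rightarrow> real \<Rightarrow> (real \<times> real) set \<Rightarrow>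
   (real \<times> real) set \<Rightarrow> (real \<times> real) set \<Rightarrow> (real \<times> real) set \<Rightarrow> (real \<times> real) set \<Rightarrow> bool" where
  "arc_claim W L H A0 B0 A1 B1 \<longleftrightarrow>
    (\<forall>f s t. flat_arc L H f s t \<and> (s, f s) \<in> A0 \<and> (t, f t) \<in> B0 \<longrightarrow>
      (\<exists>g c d. flat_arc L H g c d \<and> (c, g c) \<in> A1 \<and> (d, g d) \<in> B1 \<and>
        graph_on g {c..d} \<subseteq> W ` graph_on f {s..t} \<and>
        (\<forall>p\<in>graph_on g {c..d}. \<forall>q\<in>graph_on f {s..t}. \<bar>snd p\<bar> < \<bar>snd q\<bar> / 4) \<and>
        (\<forall>x1 x2. x1 \<in> {s..t} \<and> x2 \<in> {s..t} \<and> W (x1, f x1) = (c, g c) \<and> W (x2, f x2) = (d, g d) \<longrightarrow>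
           (\<forall>x D. min x1 x2 < x \<and> x < max x1 x2 \<and>
                  ((\<lambda>u. fst (W (u, f u))) has_real_derivative D) (at x) \<longrightarrow> D > 1))))"

end

theory Submission
  imports Defs
begin

definition wr :: "real \<Rightarrow> real \<Rightarrow> real \<Rightarrow> real" where
  "wr r B C = (B + sqrt (B^2 + 4*r*C)) / (2*r)"

lemma wr_eq:
  assumes r: "r > 0" and C: "C \<ge> 0"
  shows "r * (wr r B C)^2 - B * wr r B C - C = 0"
proof -
  define S where "S = sqrt (B^2 + 4*r*C)"
  have nn: "B^2 + 4*r*C \<ge> 0" using r C by (simp add: add_nonneg_nonneg)
  have S2: "S^2 = B^2 + 4*r*C" unfolding S_def using nn by simp
  have "r * ((B + S)/(2*r))^2 - B * ((B + S)/(2*r)) - C = (S^2 - B^2 - 4*r*C)/(4*r)"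
    using r by (simp add: field_simps power2_eq_square)
  also have "\<dots> = 0" using S2 by simp
  finally show ?thesis unfolding wr_def S_def .
qed

lemma wr_nonneg:
  assumes r: "r > 0" and C: "C \<ge> 0"
  shows "wr r B C \<ge> 0"
proof -
  have "\<bar>B\<bar> = sqrt (B^2)" by simp
  also have "\<dots> \<le> sqrt (B^2 + 4*r*C)" using r C by (intro real_sqrt_le_mono) simp
  finally have "B + sqrt (B^2 + 4*r*C) \<ge> 0" by linarith
  then show ?thesis unfolding wr_def using r by simp
qed

lemma wr_le:
  assumes r: "r > 0" and C: "C \<ge> 0" and Q: "r * v^2 - B * v - C \<le> 0"
  shows "v \<le> wr r B C"
proof -
  have nn: "B^2 + 4*r*C \<ge> 0" using r C by (simp add: add_nonneg_nonneg)
  have "2*r* v - B \<le> sqrt (B^2 + 4*r*C)"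
  proof (cases "2*r* v - B \<le> 0")
    case True then show ?thesis using nn by (meson order_trans real_sqrt_ge_zero)
  next
    case False
    have "(2*r* v - B)^2 = B^2 + 4*r*C + 4*r*(r * v^2 - B * v - C)" by (simp add: power2_eq_square algebra_simps)
    also have "\<dots> \<le> B^2 + 4*r*C" using Q r by (simp add: mult_nonneg_nonpos)
    finally show ?thesis by (rule real_le_rsqrt)
  qed
  then have "v * (2*r) \<le> B + sqrt (B^2 + 4*r*C)" by (simp add: algebra_simps)
  then show ?thesis unfolding wr_def using r by (subst pos_le_divide_eq) auto
qed

lemma wr_ge:
  assumes r: "r > 0" and C: "C \<ge> 0" and v: "v > 0" and Q: "r * v^2 - B * v - C \<ge> 0"
  shows "wr r B C \<le> v"
proof -
  have pos: "2*r* v - B \<ge> 0"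
  proof (rule ccontr)
    assume "\<not> 2*r* v - B \<ge> 0"
    moreover have "r * v > 0" using r v by simp
    ultimately have "r* v - B < 0" by linarith
    then have "v * (r* v - B) < 0" using v by (simp add: mult_pos_neg)
    then show False using Q C by (simp add: power2_eq_square algebra_simps)
  qed
  have "B^2 + 4*r*C = (2*r* v - B)^2 - 4*r*(r * v^2 - B * v - C)" by (simp add: power2_eq_square algebra_simps)
  also have "\<dots> \<le> (2*r* v - B)^2" using Q r by simp
  finally have "sqrt (B^2 + 4*r*C) \<le> sqrt ((2*r* v - B)^2)" by (rule real_sqrt_le_mono)
  also have "\<dots> = 2*r* v - B" using pos by simp
  finally have "B + sqrt (B^2 + 4*r*C) \<le> v * (2*r)" by (simp add: algebra_simps)
  then show ?thesis unfolding wr_def using r by (subst pos_divide_le_eq) auto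
qed

lemma r1sq_pos: "r1sq x y > 0"
  unfolding r1sq_def by (simp add: add_pos_nonneg)

lemma Delta_eq: "Delta x y = (x^2-4)^2 + 4 * r1sq x y * (4*x^2*y^2)"
  unfolding Delta_def r1sq_def by (simp add: power2_eq_square algebra_simps)

lemma omega_p_wr: "omega_p x y = wr (r1sq x y) (x^2-4) (4*x^2*y^2)"
  unfolding omega_p_def wr_def Delta_eq ..

lemma omega_m_wr: "omega_m x y = - wr (r1sq x y) (4-x^2) (4*x^2*y^2)"
  unfolding omega_m_def wr_def Delta_eq power2_commute[of 4 "x^2"]
  by (simp add: minus_divide_left)

lemma W_p_refl: "W_p (x, -y) = (fst (W_p (x,y)), - snd (W_p (x,y)))"
  unfolding W_p_def omega_p_def Delta_def r1sq_def by simp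

lemma W_m_refl: "W_m (x, -y) = (fst (W_m (x,y)), - snd (W_m (x,y)))"
  unfolding W_m_def omega_m_def Delta_def r1sq_def by simp

definition reg :: "real \<Rightarrow> real \<Rightarrow> bool" where
  "reg x y \<longleftrightarrow> 0 < y \<and> y \<le> 1/10000 \<and> \<bar>x - 2\<bar> \<le> 10*y"

lemma reg_basic:
  assumes "reg x y"
  shows "0 < y" "y \<le> 1/10000" "1999/1000 \<le> x" "x \<le> 2001/1000" "3996/1000 \<le> x^2" "x^2 \<le> 4005/1000"
    "y^2 \<le> y/10000" "7996/1000 \<le> r1sq x y" "r1sq x y \<le> 801/100" "\<bar>x^2-4\<bar> \<le> 41*y" "\<bar>4-x^2\<bar> \<le> 41*y"
    "x^2*y^2 \<le> 4005/1000 * y^2"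
proof -
  have y: "0 < y" "y \<le> 1/10000" "\<bar>x - 2\<bar> \<le> 10*y" using assms unfolding reg_def by auto
  then show "0 < y" "y \<le> 1/10000" by auto
  show x1: "1999/1000 \<le> x" "x \<le> 2001/1000" using y by (auto simp: abs_le_iff)
  have "(1999/1000::real)^2 \<le> x^2" by (rule power_mono) (use x1 in auto)
  then show x2: "3996/1000 \<le> x^2" by (simp add: power2_eq_square)
  have "x^2 \<le> (2001/1000::real)^2" by (rule power_mono) (use x1 in auto)
  then show x3: "x^2 \<le> 4005/1000" by (simp add: power2_eq_square)
  have "y*y \<le> y*(1/10000)" using y by (intro mult_left_mono) auto
  then show yy: "y^2 \<le> y/10000" by (simp add: power2_eq_square)
  have xy: "x^2*y^2 \<le> 4005/1000 * y^2" using x3 by (intro mult_right_mono) auto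
  then show "x^2*y^2 \<le> 4005/1000 * y^2" .
  have "4*x^2*y^2 \<ge> 0" by simp
  then show "7996/1000 \<le> r1sq x y" unfolding r1sq_def using x2 by linarith
  have "y^2 \<le> 1/10^8" using yy y by simp
  then have "4*x^2*y^2 \<le> 4*(4005/1000)*(1/10^8)" using xy by simp
  then show "r1sq x y \<le> 801/100" unfolding r1sq_def using x3 by simp
  have e: "\<bar>x^2-4\<bar> = \<bar>x-2\<bar> * \<bar>x+2\<bar>" by (simp add: abs_mult[symmetric] power2_eq_square algebra_simps)
  have "\<bar>x-2\<bar> * \<bar>x+2\<bar> \<le> (10*y) * (4001/1000)" using y x1 by (intro mult_mono) auto
  then show "\<bar>x^2-4\<bar> \<le> 41*y" using e y by simp
  then show "\<bar>4-x^2\<bar> \<le> 41*y" by (simp add: abs_minus_commute)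
qed

lemma wr_bounds:
  assumes R: "reg x y" and B: "\<bar>B\<bar> \<le> 41*y"
  shows "y/4 \<le> wr (r1sq x y) B (4*x^2*y^2)" "wr (r1sq x y) B (4*x^2*y^2) \<le> 7*y"
proof -
  note b = reg_basic[OF R]
  define r where "r = r1sq x y"
  have r: "r > 0" "7996/1000 \<le> r" "r \<le> 801/100" using b r1sq_pos unfolding r_def by auto
  have C: "4*x^2*y^2 \<ge> 0" by simp
  have ry1: "r*y^2 \<le> 801/100*y^2" using r by (intro mult_right_mono) auto
  have ry2: "r*y^2 \<ge> 7996/1000*y^2" using r by (intro mult_right_mono) auto
  have By1: "-(B*y) \<le> 41*y^2"
  proof -
    have "(-B)*y \<le> \<bar>B\<bar>*y" using b by (intro mult_right_mono) auto
    then have "-(B*y) \<le> \<bar>B\<bar>*y" by simp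
    also have "\<dots> \<le> (41*y)*y" using B b by (intro mult_right_mono) auto
    finally show ?thesis by (simp add: power2_eq_square)
  qed
  have By2: "B*y \<le> 41*y^2"
  proof -
    have "B*y \<le> \<bar>B\<bar>*y" using b by (intro mult_right_mono) auto
    also have "\<dots> \<le> (41*y)*y" using B b by (intro mult_right_mono) auto
    finally show ?thesis by (simp add: power2_eq_square)
  qed
  have xy1: "x^2*y^2 \<ge> 3996/1000*y^2" using b by (intro mult_right_mono) auto
  have xy2: "x^2*y^2 \<le> 4005/1000*y^2" using b by simp
  have y2: "y^2 > 0" using b by simp
  have e1: "r*(y/4)^2 - B*(y/4) - 4*x^2*y^2 = (r*y^2)/16 - (B*y)/4 - 4*(x^2*y^2)"
    by (simp add: power2_eq_square field_simps)
  have "r*(y/4)^2 - B*(y/4) - 4*x^2*y^2 \<le> 0" unfolding e1 using ry1 By1 xy1 y2 by linarith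
  then show "y/4 \<le> wr (r1sq x y) B (4*x^2*y^2)" unfolding r_def[symmetric] using wr_le[OF r(1) C] by blast
  have e2: "r*(7*y)^2 - B*(7*y) - 4*x^2*y^2 = 49*(r*y^2) - 7*(B*y) - 4*(x^2*y^2)"
    by (simp add: power2_eq_square field_simps)
  have "r*(7*y)^2 - B*(7*y) - 4*x^2*y^2 \<ge> 0" unfolding e2 using ry2 By2 xy2 y2 by linarith
  then show "wr (r1sq x y) B (4*x^2*y^2) \<le> 7*y" unfolding r_def[symmetric] using wr_ge[OF r(1) C] b by simp
qed

lemma hdiff: fixes a b :: real assumes "0 \<le> a" "a \<le> b" "b < 1"
  shows "(1+b)/(1-b) - (1+a)/(1-a) = 2*(b-a)/((1-a)*(1-b))"
  using assms by (simp add: field_simps)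

lemma jdiff: fixes a b :: real assumes "0 \<le> a" "a \<le> b"
  shows "b/(1+b) - a/(1+a) = (b-a)/((1+a)*(1+b))"
  using assms by (simp add: field_simps)

lemma lin1: fixes a d P :: real shows "a + 3998/1000*d \<le> P \<Longrightarrow> 0 \<le> d \<Longrightarrow> 1/1000*a + 1/10000*d \<le> 1/1000*P"
  by linarith

lemma p_step_alg:
  fixes x y x' y' w w' :: real
  assumes x: "1999/1000 \<le> x" "x < x'" and w: "0 \<le> w" "w \<le> w'" "w' \<le> 1/100"
    and y: "0 < y" "y \<le> 1/10000" and yl: "\<bar>y' - y\<bar> \<le> 1/1000*(x'-x)"
  shows "(x'-x)*((1+w)/(1-w)) \<le> (1+w')/(1-w')*x' - (1+w)/(1-w)*x"
    and "\<bar>w'/(1+w')*y' - w/(1+w)*y\<bar> \<le> 1/1000*((1+w')/(1-w')*x' - (1+w)/(1-w)*x)"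
proof -
  define H where "H = (1+w)/(1-w)"
  define H' where "H' = (1+w')/(1-w')"
  have Hd: "H' - H = 2*(w'-w)/((1-w)*(1-w'))" unfolding H_def H'_def using w by (intro hdiff) auto
  have den: "0 < (1-w)*(1-w')" "(1-w)*(1-w') \<le> 1" using w by (auto intro!: mult_pos_pos mult_le_one)
  have Hd2: "H' - H \<ge> 2*(w'-w)"
  proof -
    have "2*(w'-w)*((1-w)*(1-w')) \<le> 2*(w'-w)" using den w mult_left_mono[of "(1-w)*(1-w')" 1 "2*(w'-w)"] by simp
    then have "2*(w'-w) \<le> 2*(w'-w)/((1-w)*(1-w'))" using den by (subst pos_le_divide_eq) auto
    then show ?thesis using Hd by simp
  qed
  have H1: "H \<ge> 1" unfolding H_def using w by (simp add: le_divide_eq)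
  have split: "H'*x' - H*x = (x'-x)*H + x'*(H'-H)" by (simp add: algebra_simps)
  have x'pos: "x' > 0" using x by simp
  have t1: "x'*(H'-H) \<ge> x'*(2*(w'-w))" using Hd2 x'pos by (intro mult_left_mono) auto
  have t2: "x'*(2*(w'-w)) \<ge> (3998/1000)*(w'-w)"
  proof -
    have "(3998/1000)*(w'-w) \<le> (2*x')*(w'-w)" using x w by (intro mult_right_mono) auto
    then show ?thesis by (simp add: algebra_simps)
  qed
  show "(x'-x)*((1+w)/(1-w)) \<le> (1+w')/(1-w')*x' - (1+w)/(1-w)*x"
    using split t1 t2 w unfolding H_def[symmetric] H'_def[symmetric] by (simp add: mult.commute)
  define J where "J = w/(1+w)"
  define J' where "J' = w'/(1+w')"
  have Jd: "J' - J = (w'-w)/((1+w)*(1+w'))" unfolding J_def J'_def using w by (intro jdiff) auto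
  have dJ: "1 \<le> (1+w)*(1+w')"
  proof -
    have "(1+w)*(1+w') = 1 + w + w' + w*w'" by (simp add: algebra_simps)
    moreover have "w*w' \<ge> 0" using w by simp
    ultimately show ?thesis using w by linarith
  qed
  have Jd1: "0 \<le> J' - J" "J' - J \<le> w' - w"
  proof -
    show "0 \<le> J' - J" unfolding Jd using w dJ by simp
    have "(w'-w) \<le> (w'-w)*((1+w)*(1+w'))" using dJ w mult_left_mono[of 1 "(1+w)*(1+w')" "w'-w"] by simp
    then show "J' - J \<le> w' - w" unfolding Jd using dJ by (subst pos_divide_le_eq) auto
  qed
  have J'b: "0 \<le> J'" "J' \<le> 1" unfolding J'_def using w by (auto simp: divide_le_eq)
  have splitJ: "J'*y' - J*y = J'*(y'-y) + y*(J'-J)" by (simp add: algebra_simps)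
  have a1: "\<bar>J'*(y'-y)\<bar> \<le> 1/1000*(x'-x)"
  proof -
    have "\<bar>J'*(y'-y)\<bar> = J' * \<bar>y'-y\<bar>" using J'b by (simp add: abs_mult)
    also have "\<dots> \<le> 1 * \<bar>y'-y\<bar>" using J'b by (intro mult_right_mono) auto
    finally show ?thesis using yl by simp
  qed
  have a2: "\<bar>y*(J'-J)\<bar> \<le> (1/10000)*(w'-w)"
  proof -
    have "\<bar>y*(J'-J)\<bar> = y*(J'-J)" using y Jd1 by simp
    also have "\<dots> \<le> (1/10000)*(w'-w)" using y Jd1 by (intro mult_mono) auto
    finally show ?thesis .
  qed
  have "\<bar>J'*y' - J*y\<bar> \<le> 1/1000*(x'-x) + (1/10000)*(w'-w)" using splitJ a1 a2 abs_triangle_ineq[of "J'*(y'-y)" "y*(J'-J)"] by linarith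
  also have "\<dots> \<le> 1/1000*(H'*x' - H*x)"
  proof -
    have "(x'-x)*H \<ge> (x'-x)*1" using H1 x by (intro mult_left_mono) auto
    then have "(x'-x)*1 + (3998/1000)*(w'-w) \<le> (x'-x)*H + x'*(H'-H)"
      using order_trans[OF t2 t1] by (rule add_mono)
    then have "H'*x' - H*x \<ge> (x'-x) + (3998/1000)*(w'-w)" unfolding split by simp
    moreover have "w' - w \<ge> 0" using w by simp
    ultimately show ?thesis using lin1 by blast
  qed
  finally show "\<bar>w'/(1+w')*y' - w/(1+w)*y\<bar> \<le> 1/1000*((1+w')/(1-w')*x' - (1+w)/(1-w)*x)"
    unfolding J_def J'_def H_def H'_def .
qed

lemma p_mono_alg:
  fixes x y x' y' w :: real
  assumes x: "1999/1000 \<le> x" "x < x'" "x' \<le> 2001/1000" and y: "0 < y" "0 < y'"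
    and w: "y/4 \<le> w" "w \<le> 1/1000"
    and yl: "\<bar>y' - y\<bar> \<le> 1/1000*(x'-x)"
  shows "(x'^2 - x^2)*w + 4*(x'^2*y'^2 - x^2*y^2)*(1+w) \<ge> 0"
proof -
  define d where "d = x' - x"
  have d: "d > 0" unfolding d_def using x by simp
  have e1: "x'^2 - x^2 = (x'+x)*d" unfolding d_def by (simp add: power2_eq_square algebra_simps)
  have "(3998/1000)*d \<le> (x'+x)*d" using x d by (intro mult_right_mono) auto
  then have "((3998/1000)*d)*(y/4) \<le> ((x'+x)*d)*w" using w d y by (intro mult_mono) auto
  then have k1: "(x'^2 - x^2)*w \<ge> (3998/4000)*(y*d)" unfolding e1 by (simp add: algebra_simps)
  define P where "P = x'*y' - x*y"
  define S where "S = x'*y' + x*y"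
  have CS: "x'^2*y'^2 - x^2*y^2 = P*S" unfolding P_def S_def by (simp add: power2_eq_square algebra_simps)
  have Spos: "S > 0" unfolding S_def using x y by (simp add: add_pos_pos)
  have wpos: "w \<ge> 0" using w y by linarith
  show ?thesis
  proof (cases "P \<ge> 0")
    case True
    then have "P*S \<ge> 0" using Spos by simp
    then have "4*(x'^2*y'^2 - x^2*y^2)*(1+w) \<ge> 0" unfolding CS using wpos by simp
    moreover have "(x'^2 - x^2)*w \<ge> 0" proof -
      have "y*d > 0" using y d by simp
      then show ?thesis using k1 by linarith
    qed
    ultimately show ?thesis by linarith
  next
    case False
    have "-(1/1000*d) \<le> y' - y" using yl[unfolded abs_le_iff] unfolding d_def by linarith
    then have "x'*(y'-y) \<ge> x'*(-(1/1000*d))" using x by (intro mult_left_mono) auto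
    moreover have "P = x'*(y'-y) + y*d" unfolding P_def d_def by (simp add: algebra_simps)
    moreover have "y*d \<ge> 0" using y d by simp
    ultimately have pP: "P \<ge> -(x'*(1/1000*d))" by linarith
    have "S \<le> 2*(x*y)" unfolding S_def using False unfolding P_def by simp
    then have "P*(2*(x*y)) \<le> P*S" using False by (intro mult_left_mono_neg) auto
    moreover have "-(x'*(1/1000*d))*(2*(x*y)) \<le> P*(2*(x*y))" using pP x y by (intro mult_right_mono) auto
    moreover have "-(x'*(1/1000*d))*(2*(x*y)) = -(2/1000)*((x'*x)*(y*d))" by (simp add: algebra_simps)
    moreover have "(x'*x)*(y*d) \<le> (4005/1000)*(y*d)"
    proof -
      have "x'*x \<le> (2001/1000)*(2001/1000)" using x by (intro mult_mono) auto
      then show ?thesis using y d by (intro mult_right_mono) auto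
    qed
    ultimately have PS: "P*S \<ge> -(801/100000)*(y*d)" by linarith
    have neg: "P*S < 0" using False Spos by (simp add: mult_neg_pos)
    have "(P*S)*(1001/1000) \<le> (P*S)*(1+w)" using neg w by (intro mult_left_mono_neg) auto
    then have "4*(x'^2*y'^2 - x^2*y^2)*(1+w) \<ge> 4*(P*S)*(1001/1000)" unfolding CS by simp
    moreover have "y*d > 0" using y d by simp
    ultimately show ?thesis using PS k1 by linarith
  qed
qed

lemma omp_bounds: assumes "reg x y" shows "y/4 \<le> omega_p x y" "omega_p x y \<le> 7*y"
  using wr_bounds[OF assms, of "x^2-4"] reg_basic[OF assms] unfolding omega_p_wr by auto

lemma p_mono:
  assumes R: "reg x y" and R': "reg x' y'" and xx: "x < x'" and yl: "\<bar>y' - y\<bar> \<le> 1/1000*(x'-x)"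
  shows "omega_p x y \<le> omega_p x' y'"
proof -
  note b = reg_basic[OF R] and b' = reg_basic[OF R']
  define w where "w = omega_p x y"
  have wb: "y/4 \<le> w" "w \<le> 7*y" using omp_bounds[OF R] unfolding w_def by auto
  have w1: "w \<le> 1/1000" using wb b by linarith
  have C: "4*x^2*y^2 \<ge> 0" "4*x'^2*y'^2 \<ge> 0" by auto
  have eq: "r1sq x y * w^2 - (x^2-4) * w - 4*x^2*y^2 = 0"
    unfolding w_def omega_p_wr by (rule wr_eq[OF r1sq_pos C(1)])
  have K: "(x'^2 - x^2)*w + 4*(x'^2*y'^2 - x^2*y^2)*(1+w) \<ge> 0"
    using p_mono_alg[of x x' y y' w] b b' xx wb w1 yl by auto
  have "r1sq x' y' * w^2 - (x'^2-4) * w - 4*x'^2*y'^2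
      = (r1sq x' y' * w^2 - (x'^2-4) * w - 4*x'^2*y'^2) - (r1sq x y * w^2 - (x^2-4) * w - 4*x^2*y^2)"
    using eq by simp
  also have "\<dots> = -(1-w)*((x'^2 - x^2)*w + 4*(x'^2*y'^2 - x^2*y^2)*(1+w))"
    unfolding r1sq_def by (simp add: power2_eq_square algebra_simps)
  also have "\<dots> \<le> 0"
  proof -
    have "0 \<le> (1-w)*((x'^2 - x^2)*w + 4*(x'^2*y'^2 - x^2*y^2)*(1+w))" using K w1 by (intro mult_nonneg_nonneg) auto
    then show ?thesis by linarith
  qed
  finally have "r1sq x' y' * w^2 - (x'^2-4) * w - 4*x'^2*y'^2 \<le> 0" .
  then show ?thesis unfolding w_def[symmetric] omega_p_wr[of x' y'] by (rule wr_le[OF r1sq_pos C(2)])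
qed

lemma Wp_fst: "fst (W_p (x,y)) = (1 + omega_p x y)/(1 - omega_p x y) * x"
  unfolding W_p_def by simp
lemma Wp_snd: "snd (W_p (x,y)) = \<bar>omega_p x y\<bar>/(1 + omega_p x y) * y"
  unfolding W_p_def by simp

lemma hb: fixes w :: real assumes "0 \<le> w" "w \<le> 1/3"
  shows "(1+w)/(1-w) \<le> 1 + 3*w" "1 + w \<le> (1+w)/(1-w)"
proof -
  have "1 + w \<le> (1 + 3*w)*(1-w)" using assms by (simp add: algebra_simps power2_eq_square) (smt (verit) mult_left_le)
  then show "(1+w)/(1-w) \<le> 1 + 3*w" using assms by (subst pos_divide_le_eq) auto
  have "(1+w)*(1-w) \<le> 1 + w" using assms by (simp add: algebra_simps)
  then show "1 + w \<le> (1+w)/(1-w)" using assms by (subst pos_le_divide_eq) auto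
qed

lemma jb: fixes w :: real assumes "0 \<le> w" shows "w/(1+w) \<le> w" "0 \<le> w/(1+w)"
proof -
  have "w \<le> w*(1+w)" using assms by (simp add: algebra_simps)
  then show "w/(1+w) \<le> w" using assms by (subst pos_divide_le_eq) auto
  show "0 \<le> w/(1+w)" using assms by simp
qed

lemma cont_omega_p:
  assumes "continuous_on S f"
  shows "continuous_on S (\<lambda>u. omega_p u (f u))"
proof -
  have rne: "\<And>u v. 2 * (4 + u^2 + 4*u^2 * v^2) \<noteq> (0::real)"
    using r1sq_pos unfolding r1sq_def by (metis mult_eq_0_iff not_less_iff_gr_or_eq zero_neq_numeral)
  show ?thesis unfolding omega_p_def Delta_def r1sq_def
    by (intro continuous_intros assms) (use rne in auto)
qed

lemma p_left_end:
  assumes y: "0 < y" "y \<le> 1/10000" and x: "x = 2 - 10*y"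
  shows "fst (W_p (x,y)) + 10 * snd (W_p (x,y)) \<le> 2"
proof -
  have R: "reg x y" unfolding reg_def using y x by simp
  note b = reg_basic[OF R]
  define w where "w = omega_p x y"
  have w0: "w \<ge> 0" using omp_bounds[OF R] y unfolding w_def by linarith
  have C: "4*x^2*y^2 \<ge> 0" by simp
  have e: "x^2 - 4 = -10*y*(x+2)" unfolding x by (simp add: power2_eq_square algebra_simps)
  have "r1sq x y * y^2 - (x^2-4)*y - 4*x^2*y^2 = r1sq x y * y^2 + 10*((x+2)*y^2) - 4*(x^2*y^2)"
    unfolding e by (simp add: power2_eq_square algebra_simps)
  also have "\<dots> \<ge> 0"
  proof -
    have "r1sq x y * y^2 \<ge> 0" using r1sq_pos[of x y] by simp
    moreover have "(x+2)*y^2 \<ge> 3*y^2" using b by (intro mult_right_mono) auto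
    moreover have "x^2*y^2 \<le> 4005/1000*y^2" using b by simp
    moreover have "y^2 \<ge> 0" by simp
    ultimately show ?thesis by linarith
  qed
  finally have "w \<le> y" unfolding w_def omega_p_wr using wr_ge[OF r1sq_pos C y(1)] by simp
  then have w1: "w \<le> 1/10000" using y by linarith
  have f1: "(1+w)/(1-w) \<le> 1 + 3*w" using hb[of w] w0 w1 by simp
  have "(1+w)/(1-w) * x \<le> (1 + 3*w) * x" using f1 b by (intro mult_right_mono) auto
  also have "\<dots> = x + (3*w)*x" by (simp add: algebra_simps)
  also have "\<dots> \<le> x + (3*y)*2" using \<open>w \<le> y\<close> b w0 x y by (intro add_left_mono mult_mono) auto
  finally have p1: "(1+w)/(1-w) * x \<le> x + 6*y" by simp
  have "w/(1+w)*y \<le> w*y" using jb[OF w0] y by (intro mult_right_mono) auto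
  also have "\<dots> \<le> (1/10000)*y" using w1 y by (intro mult_right_mono) auto
  finally have p2: "w/(1+w)*y \<le> y/10000" by simp
  have F: "fst (W_p (x,y)) = (1+w)/(1-w)*x" unfolding Wp_fst w_def by simp
  have S: "snd (W_p (x,y)) = w/(1+w)*y" unfolding Wp_snd w_def[symmetric] using w0 by simp
  show ?thesis unfolding F S using p1 p2 x y by linarith
qed

lemma p_right_end:
  assumes y: "0 < y" "y \<le> 1/10000"
  shows "fst (W_p (2,y)) - 10 * snd (W_p (2,y)) \<ge> 2"
proof -
  have R: "reg 2 y" unfolding reg_def using y by simp
  define w where "w = omega_p 2 y"
  have w0: "w \<ge> 0" "w \<le> 7*y" using omp_bounds[OF R] y unfolding w_def by auto
  have w1: "w \<le> 1/3" using w0 y by linarith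
  have "1 + w \<le> (1+w)/(1-w)" using hb(2)[of w] w0 w1 by simp
  then have p1: "(1+w)/(1-w) * 2 \<ge> (1+w)*2" by (rule mult_right_mono) simp
  have "w/(1+w)*y \<le> w*y" using jb[of w] w0 y by (intro mult_right_mono) auto
  also have "\<dots> \<le> w*(1/10000)" using w0 y by (intro mult_left_mono) auto
  finally have p2: "w/(1+w)*y \<le> w/10000" by simp
  have F: "fst (W_p (2,y)) = (1+w)/(1-w)*2" unfolding Wp_fst w_def by simp
  have S: "snd (W_p (2,y)) = w/(1+w)*y" unfolding Wp_snd w_def[symmetric] using w0 by simp
  have "(1+w)*2 = 2 + 2*w" by simp
  then show ?thesis unfolding F S using p1 p2 w0 by linarith
qed

lemma p_psi:
  assumes R: "reg x y"
  shows "0 < snd (W_p (x,y))" "snd (W_p (x,y)) \<le> 7*y^2"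
proof -
  note b = reg_basic[OF R]
  define w where "w = omega_p x y"
  have w0: "w \<ge> y/4" "w \<le> 7*y" using omp_bounds[OF R] unfolding w_def by auto
  have wp: "w > 0" using w0 b by linarith
  show "0 < snd (W_p (x,y))" unfolding Wp_snd w_def[symmetric] using wp b by simp
  have "w/(1+w)*y \<le> w*y" using jb[of w] wp b by (intro mult_right_mono) auto
  also have "\<dots> \<le> (7*y)*y" using w0 b by (intro mult_right_mono) auto
  finally show "snd (W_p (x,y)) \<le> 7*y^2" unfolding Wp_snd w_def[symmetric] using wp
    by (simp add: power2_eq_square)
qed

lemma p_pair:
  assumes R: "reg x y" and R': "reg x' y'" and xx: "x < x'" and yl: "\<bar>y' - y\<bar> \<le> 1/1000*(x'-x)"
  shows "(x'-x)*(1 + omega_p x y) \<le> fst (W_p (x',y')) - fst (W_p (x,y))"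
    "\<bar>snd (W_p (x',y')) - snd (W_p (x,y))\<bar> \<le> 1/1000*(fst (W_p (x',y')) - fst (W_p (x,y)))"
proof -
  note b = reg_basic[OF R] and b' = reg_basic[OF R']
  define w where "w = omega_p x y"
  define w' where "w' = omega_p x' y'"
  have w0: "w \<ge> y/4" "w \<le> 7*y" using omp_bounds[OF R] unfolding w_def by auto
  have w0': "w' \<ge> y'/4" "w' \<le> 7*y'" using omp_bounds[OF R'] unfolding w'_def by auto
  have ww: "w \<le> w'" unfolding w_def w'_def by (rule p_mono[OF R R' xx yl])
  have wpos: "w \<ge> 0" "w' \<ge> 0" using w0 w0' b b' by linarith+
  have st: "(x'-x)*((1+w)/(1-w)) \<le> (1+w')/(1-w')*x' - (1+w)/(1-w)*x"
    "\<bar>w'/(1+w')*y' - w/(1+w)*y\<bar> \<le> 1/1000*((1+w')/(1-w')*x' - (1+w)/(1-w)*x)"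
    using p_step_alg[of x x' w w' y y'] b b' xx wpos ww w0' yl by auto
  have "(x'-x)*(1+w) \<le> (x'-x)*((1+w)/(1-w))" using hb[of w] wpos w0 b xx by (intro mult_left_mono) auto
  then show "(x'-x)*(1 + omega_p x y) \<le> fst (W_p (x',y')) - fst (W_p (x,y))"
    unfolding Wp_fst w_def[symmetric] w'_def[symmetric] using st by linarith
  show "\<bar>snd (W_p (x',y')) - snd (W_p (x,y))\<bar> \<le> 1/1000*(fst (W_p (x',y')) - fst (W_p (x,y)))"
    unfolding Wp_fst Wp_snd w_def[symmetric] w'_def[symmetric] using st wpos by simp
qed

lemma lip_inv:
  fixes \<phi> \<psi> iv :: "real \<Rightarrow> real"
  assumes iv: "\<And>z. z \<in> {c..d} \<Longrightarrow> p \<le> iv z \<and> iv z \<le> q \<and> \<phi> (iv z) = z"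
    and lip: "\<And>u v. p \<le> u \<Longrightarrow> u < v \<Longrightarrow> v \<le> q \<Longrightarrow> \<bar>\<psi> v - \<psi> u\<bar> \<le> L*(\<phi> v - \<phi> u)"
    and mono: "\<And>u v. p \<le> u \<Longrightarrow> u < v \<Longrightarrow> v \<le> q \<Longrightarrow> \<phi> u < \<phi> v"
    and L0: "0 \<le> L"
  shows "L-lipschitz_on {c..d} (\<lambda>z. \<psi> (iv z))"
proof (rule lipschitz_onI)
  fix z z' assume z: "z \<in> {c..d}" and z': "z' \<in> {c..d}"
  have iz: "p \<le> iv z" "iv z \<le> q" "\<phi> (iv z) = z" using iv[OF z] by auto
  have iz': "p \<le> iv z'" "iv z' \<le> q" "\<phi> (iv z') = z'" using iv[OF z'] by auto
  consider "iv z < iv z'" | "iv z = iv z'" | "iv z' < iv z" by linarith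
  then show "dist (\<psi> (iv z)) (\<psi> (iv z')) \<le> L * dist z z'"
  proof cases
    case 1
    have l1: "\<bar>\<psi> (iv z') - \<psi> (iv z)\<bar> \<le> L*(z' - z)"
      using lip[OF iz(1) 1 iz'(2)] iz(3) iz'(3) by simp
    have "z < z'" using mono[OF iz(1) 1 iz'(2)] iz(3) iz'(3) by simp
    then have "dist z z' = z' - z" by (simp add: dist_real_def)
    moreover have "dist (\<psi> (iv z)) (\<psi> (iv z')) = \<bar>\<psi> (iv z') - \<psi> (iv z)\<bar>"
      by (simp add: dist_real_def abs_minus_commute)
    ultimately show ?thesis using l1 by simp
  next
    case 2
    then have "z = z'" using iz(3) iz'(3) by metis
    then show ?thesis by simp
  next
    case 3
    have l1: "\<bar>\<psi> (iv z) - \<psi> (iv z')\<bar> \<le> L*(z - z')"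
      using lip[OF iz'(1) 3 iz(2)] iz(3) iz'(3) by simp
    have "z' < z" using mono[OF iz'(1) 3 iz(2)] iz(3) iz'(3) by simp
    then have "dist z z' = z - z'" by (simp add: dist_real_def)
    moreover have "dist (\<psi> (iv z)) (\<psi> (iv z')) = \<bar>\<psi> (iv z) - \<psi> (iv z')\<bar>"
      by (simp add: dist_real_def)
    ultimately show ?thesis using l1 by simp
  qed
qed (use L0 in simp)

lemma arc_core:
  fixes \<phi> \<psi> f :: "real \<Rightarrow> real" and W :: "real \<times> real \<Rightarrow> real \<times> real"
  assumes st: "s \<le> t"
    and cphi: "continuous_on {s..t} \<phi>" and cpsi: "continuous_on {s..t} \<psi>"
    and mono: "\<And>u v. s \<le> u \<Longrightarrow> u < v \<Longrightarrow> v \<le> t \<Longrightarrow> m*(v-u) \<le> \<phi> v - \<phi> u"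
    and m1: "m > 1"
    and lip: "\<And>u v. s \<le> u \<Longrightarrow> u < v \<Longrightarrow> v \<le> t \<Longrightarrow> \<bar>\<psi> v - \<psi> u\<bar> \<le> L*(\<phi> v - \<phi> u)"
    and L0: "0 < L" and L1: "L < 1/10"
    and ends1: "\<phi> s + 10*\<psi> s \<le> 2" and ends2: "\<phi> t - 10*\<psi> t \<ge> 2"
    and pos: "\<And>u. u \<in> {s..t} \<Longrightarrow> 0 < \<psi> u \<and> \<psi> u \<le> a"
    and small: "\<And>u v. u \<in> {s..t} \<Longrightarrow> v \<in> {s..t} \<Longrightarrow> \<psi> u < \<bar>f v\<bar>/4"
    and Weq: "\<And>u. W (u, f u) = (\<phi> u, \<psi> u)"
  shows "\<exists>g c d. flat_arc L (upper_half a) g c d \<and> (c, g c) \<in> faceNW a \<and> (d, g d) \<in> faceNE a \<and>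
        graph_on g {c..d} \<subseteq> W ` graph_on f {s..t} \<and>
        (\<forall>p\<in>graph_on g {c..d}. \<forall>q\<in>graph_on f {s..t}. \<bar>snd p\<bar> < \<bar>snd q\<bar> / 4) \<and>
        (\<forall>x1 x2. x1 \<in> {s..t} \<and> x2 \<in> {s..t} \<and> W (x1, f x1) = (c, g c) \<and> W (x2, f x2) = (d, g d) \<longrightarrow>
           (\<forall>x D. min x1 x2 < x \<and> x < max x1 x2 \<and>
                  ((\<lambda>u. fst (W (u, f u))) has_real_derivative D) (at x) \<longrightarrow> D > 1))"
proof -
  define h1 where "h1 u = \<phi> u + 10 * \<psi> u" for u
  define h2 where "h2 u = \<phi> u - 10 * \<psi> u" for u
  have phimono: "\<phi> u < \<phi> v" if "s \<le> u" "u < v" "v \<le> t" for u v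
  proof -
    have "m*(v-u) \<le> \<phi> v - \<phi> u" using mono that by blast
    moreover have "m*(v-u) > 0" using m1 that by simp
    ultimately show ?thesis by linarith
  qed
  have h1mono: "h1 u < h1 v" if "s \<le> u" "u < v" "v \<le> t" for u v
  proof -
    have a: "\<bar>\<psi> v - \<psi> u\<bar> \<le> L*(\<phi> v - \<phi> u)" using lip that by blast
    have b: "\<phi> u < \<phi> v" using phimono that by blast
    have "10 * (L*(\<phi> v - \<phi> u)) < \<phi> v - \<phi> u" using b L1 by simp
    then show ?thesis using a unfolding h1_def by linarith
  qed
  have h2mono: "h2 u < h2 v" if "s \<le> u" "u < v" "v \<le> t" for u v
  proof -
    have a: "\<bar>\<psi> v - \<psi> u\<bar> \<le> L*(\<phi> v - \<phi> u)" using lip that by blast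
    have b: "\<phi> u < \<phi> v" using phimono that by blast
    have "10 * (L*(\<phi> v - \<phi> u)) < \<phi> v - \<phi> u" using b L1 by simp
    then show ?thesis using a unfolding h2_def by linarith
  qed
  have ch1: "continuous_on {s..t} h1" unfolding h1_def by (intro continuous_intros cphi cpsi)
  have ch2: "continuous_on {s..t} h2" unfolding h2_def by (intro continuous_intros cphi cpsi)
  have pt: "0 < \<psi> t" "0 < \<psi> s" using pos st by auto
  obtain x1 where x1: "s \<le> x1" "x1 \<le> t" "h1 x1 = 2"
    using IVT'[of h1 s 2 t] ch1 ends1 ends2 pt st unfolding h1_def by force
  obtain x2 where x2: "s \<le> x2" "x2 \<le> t" "h2 x2 = 2"
    using IVT'[of h2 s 2 t] ch2 ends1 ends2 pt st unfolding h2_def by force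
  have x12: "x1 < x2"
  proof (rule ccontr)
    assume "\<not> x1 < x2"
    hence "x2 = x1 \<or> x2 < x1" by linarith
    moreover have "h1 x2 > 2" using x2 pos[of x2] unfolding h1_def h2_def by auto
    ultimately show False using h1mono[of x2 x1] x1 x2 by auto
  qed
  define c where "c = \<phi> x1"
  define d where "d = \<phi> x2"
  have cphi12: "continuous_on {x1..x2} \<phi>" using cphi x1 x2 continuous_on_subset by fastforce
  have surj: "\<exists>u. x1 \<le> u \<and> u \<le> x2 \<and> \<phi> u = z" if "z \<in> {c..d}" for z
    using IVT'[of \<phi> x1 z x2] cphi12 that x12 unfolding c_def d_def by auto
  define inv where "inv z = (SOME u. x1 \<le> u \<and> u \<le> x2 \<and> \<phi> u = z)" for z
  have inv: "x1 \<le> inv z \<and> inv z \<le> x2 \<and> \<phi> (inv z) = z" if "z \<in> {c..d}" for z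
    unfolding inv_def using someI_ex[OF surj[OF that]] .
  have injphi: "u = v" if "x1 \<le> u" "u \<le> x2" "x1 \<le> v" "v \<le> x2" "\<phi> u = \<phi> v" for u v
    using phimono[of u v] phimono[of v u] that x1 x2 by (cases u v rule: linorder_cases) auto
  have inv_phi: "inv (\<phi> u) = u" if "x1 \<le> u" "u \<le> x2" for u
  proof -
    have "\<phi> u \<in> {c..d}" unfolding c_def d_def using that phimono[of x1 u] phimono[of u x2] x1 x2
      by (cases "x1 = u"; cases "u = x2") auto
    then show ?thesis using inv[of "\<phi> u"] injphi that by blast
  qed
  define g where "g z = \<psi> (inv z)" for z
  have cd: "c < d" unfolding c_def d_def using phimono[of x1 x2] x12 x1 x2 by linarith
  have gc: "g c = \<psi> x1" unfolding g_def c_def using inv_phi[of x1] x12 by simp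
  have gd: "g d = \<psi> x2" unfolding g_def d_def using inv_phi[of x2] x12 by simp
  have lipg: "L-lipschitz_on {c..d} g"
    unfolding g_def[abs_def]
  proof (rule lip_inv[where iv=inv and \<psi>=\<psi> and \<phi>=\<phi> and p=x1 and q=x2])
    show "\<And>z. z \<in> {c..d} \<Longrightarrow> x1 \<le> inv z \<and> inv z \<le> x2 \<and> \<phi> (inv z) = z" using inv by blast
    show "\<And>u v. x1 \<le> u \<Longrightarrow> u < v \<Longrightarrow> v \<le> x2 \<Longrightarrow> \<bar>\<psi> v - \<psi> u\<bar> \<le> L*(\<phi> v - \<phi> u)"
      using lip x1 x2 by auto
    show "\<And>u v. x1 \<le> u \<Longrightarrow> u < v \<Longrightarrow> v \<le> x2 \<Longrightarrow> \<phi> u < \<phi> v"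
      using phimono x1 x2 by auto
  qed (use L0 in simp)
  have inwedge: "(\<phi> u, \<psi> u) \<in> upper_half a" if "x1 \<le> u" "u \<le> x2" for u
  proof -
    have "h1 x1 \<le> h1 u" using h1mono[of x1 u] that x1 x2 by (cases "x1 = u") auto
    moreover have "h2 u \<le> h2 x2" using h2mono[of u x2] that x1 x2 by (cases "x2 = u") auto
    moreover have "0 < \<psi> u \<and> \<psi> u \<le> a" using pos that x1 x2 by auto
    ultimately show ?thesis using x1 x2 unfolding upper_half_def wedgeV_def h1_def h2_def by auto
  qed
  have graph_pts: "p \<in> graph_on g {c..d} \<Longrightarrow> \<exists>u. x1 \<le> u \<and> u \<le> x2 \<and> p = (\<phi> u, \<psi> u)" for p
  proof -
    assume "p \<in> graph_on g {c..d}"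
    then obtain z where z: "z \<in> {c..d}" "p = (z, g z)" unfolding graph_on_def by auto
    then show ?thesis using inv[OF z(1)] unfolding g_def by (metis)
  qed
  show ?thesis
  proof (intro exI conjI)
    show "flat_arc L (upper_half a) g c d"
      unfolding flat_arc_def using cd lipg graph_pts inwedge by auto
    show "(c, g c) \<in> faceNW a" unfolding gc unfolding faceNW_def c_def using x1 pos[of x1] unfolding h1_def by auto
    show "(d, g d) \<in> faceNE a" unfolding gd unfolding faceNE_def d_def using x2 pos[of x2] unfolding h2_def by auto
    show "graph_on g {c..d} \<subseteq> W ` graph_on f {s..t}"
    proof
      fix p assume "p \<in> graph_on g {c..d}"
      then obtain u where u: "x1 \<le> u" "u \<le> x2" "p = (\<phi> u, \<psi> u)" using graph_pts by blast
      have "(u, f u) \<in> graph_on f {s..t}" unfolding graph_on_def using u x1 x2 by auto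
      then show "p \<in> W ` graph_on f {s..t}" using Weq[of u] u by force
    qed
    show "\<forall>p\<in>graph_on g {c..d}. \<forall>q\<in>graph_on f {s..t}. \<bar>snd p\<bar> < \<bar>snd q\<bar> / 4"
    proof (intro ballI)
      fix p q assume p: "p \<in> graph_on g {c..d}" and q: "q \<in> graph_on f {s..t}"
      obtain u where u: "x1 \<le> u" "u \<le> x2" "p = (\<phi> u, \<psi> u)" using graph_pts p by blast
      obtain v where v: "v \<in> {s..t}" "q = (v, f v)" using q unfolding graph_on_def by auto
      have "u \<in> {s..t}" using u x1 x2 by auto
      then show "\<bar>snd p\<bar> < \<bar>snd q\<bar> / 4" using small[OF _ v(1)] pos u v by force
    qed
    show "\<forall>x1 x2. x1 \<in> {s..t} \<and> x2 \<in> {s..t} \<and> W (x1, f x1) = (c, g c) \<and> W (x2, f x2) = (d, g d) \<longrightarrow>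
           (\<forall>x D. min x1 x2 < x \<and> x < max x1 x2 \<and>
                  ((\<lambda>u. fst (W (u, f u))) has_real_derivative D) (at x) \<longrightarrow> D > 1)"
    proof (intro allI impI)
      fix y1 y2 x D
      assume A: "y1 \<in> {s..t} \<and> y2 \<in> {s..t} \<and> W (y1, f y1) = (c, g c) \<and> W (y2, f y2) = (d, g d)"
      assume B: "min y1 y2 < x \<and> x < max y1 y2 \<and> ((\<lambda>u. fst (W (u, f u))) has_real_derivative D) (at x)"
      have xs: "s < x" "x < t" using A B by auto
      have fe: "(\<lambda>u. fst (W (u, f u))) = \<phi>" using Weq by (simp add: fun_eq_iff)
      have Dd: "(\<phi> has_real_derivative D) (at x)" using B fe by simp
      show "D > 1"
      proof (rule ccontr)
        assume "\<not> D > 1"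
        hence Dm: "D - m < 0" using m1 by simp
        have "((\<lambda>u. \<phi> u - m*u) has_real_derivative D - m) (at x)"
          using DERIV_diff[OF Dd DERIV_cmult[OF DERIV_ident, of m]] by simp
        from DERIV_neg_dec_right[OF this Dm] obtain e where e: "e > 0"
          "\<And>h. h > 0 \<Longrightarrow> h < e \<Longrightarrow> \<phi> x - m*x > \<phi> (x+h) - m*(x+h)" by blast
        obtain m0 where hm: "m0 \<le> t - x" "m0 \<le> e" "0 < m0"
          using e xs by (intro that[of "min e (t - x)"]) auto
        define h where "h = m0 / 2"
        have h1: "h > 0" using hm unfolding h_def by linarith
        have h2: "h < e" using hm unfolding h_def by linarith
        have h3: "x + h \<le> t" using hm unfolding h_def by linarith
        note h = h1 h2 h3
        have "m*((x+h)-x) \<le> \<phi> (x+h) - \<phi> x" using mono[of x "x+h"] h xs by auto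
        moreover have "\<phi> x - m*x > \<phi> (x+h) - m*(x+h)" using e h by auto
        ultimately show False by (simp add: algebra_simps)
      qed
    qed
  qed
qed

lemma lin2: fixes A B c :: real shows "A \<le> 1/1000*B \<Longrightarrow> B \<le> 10*c \<Longrightarrow> A \<le> 1/100*c"
  by linarith

lemma arc_setup:
  assumes A: "flat_arc (1/1000) (upper_half (1/10000)) f s t"
  shows "s \<le> t" "continuous_on {s..t} f"
    "\<And>u. u \<in> {s..t} \<Longrightarrow> reg u (f u)"
    "\<And>u v. u \<in> {s..t} \<Longrightarrow> v \<in> {s..t} \<Longrightarrow> \<bar>f v - f u\<bar> \<le> 1/1000*\<bar>v - u\<bar>"
proof -
  have lip: "(1/1000)-lipschitz_on {s..t} f" and gr: "graph_on f {s..t} \<subseteq> upper_half (1/10000)"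
    and st: "s \<le> t" using A unfolding flat_arc_def by auto
  show "s \<le> t" by fact
  show "continuous_on {s..t} f" using lipschitz_on_continuous_on[OF lip] .
  show "reg u (f u)" if "u \<in> {s..t}" for u
  proof -
    have "(u, f u) \<in> upper_half (1/10000)" using gr that unfolding graph_on_def by auto
    then show ?thesis unfolding upper_half_def wedgeV_def reg_def by auto
  qed
  show "\<bar>f v - f u\<bar> \<le> 1/1000*\<bar>v - u\<bar>" if "u \<in> {s..t}" "v \<in> {s..t}" for u v
    using lipschitz_onD[OF lip that(2) that(1)] by (simp add: dist_real_def)
qed

lemma cont_Wp:
  assumes cf: "continuous_on {s..t} f" and R: "\<And>u. u \<in> {s..t} \<Longrightarrow> reg u (f u)"
  shows "continuous_on {s..t} (\<lambda>u. fst (W_p (u, f u)))" "continuous_on {s..t} (\<lambda>u. snd (W_p (u, f u)))"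
proof -
  have co: "continuous_on {s..t} (\<lambda>u. omega_p u (f u))" by (rule cont_omega_p[OF cf])
  have wb: "0 < omega_p u (f u) \<and> omega_p u (f u) < 1" if "u \<in> {s..t}" for u
    using omp_bounds[OF R[OF that]] reg_basic[OF R[OF that]] by auto
  have e1: "(\<lambda>u. fst (W_p (u, f u))) = (\<lambda>u. (1 + omega_p u (f u))/(1 - omega_p u (f u)) * u)"
    by (simp add: Wp_fst)
  have e2: "(\<lambda>u. snd (W_p (u, f u))) = (\<lambda>u. \<bar>omega_p u (f u)\<bar>/(1 + omega_p u (f u)) * f u)"
    by (simp add: Wp_snd)
  show "continuous_on {s..t} (\<lambda>u. fst (W_p (u, f u)))" unfolding e1
    by (intro continuous_intros co) (use wb in force)
  show "continuous_on {s..t} (\<lambda>u. snd (W_p (u, f u)))" unfolding e2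
    by (intro continuous_intros co cf) (use wb in force)
qed

lemma case_pu: "arc_claim W_p (1/1000) (upper_half (1/10000)) (faceNW (1/10000)) line_x2 (faceNW (1/10000)) (faceNE (1/10000))"
  unfolding arc_claim_def
proof (intro allI impI)
  fix f s t
  assume A: "flat_arc (1/1000) (upper_half (1/10000)) f s t \<and> (s, f s) \<in> faceNW (1/10000) \<and> (t, f t) \<in> line_x2"
  note S = arc_setup[OF conjunct1[OF A]]
  have t2: "t = 2" using A unfolding line_x2_def by auto
  have fs: "f s = (2 - s)/10" "0 < f s" "f s \<le> 1/10000" using A unfolding faceNW_def by auto
  have sI: "s \<in> {s..t}" and tI: "t \<in> {s..t}" using S(1) by auto
  have fb: "99/100 * f s \<le> f u \<and> f u \<le> 101/100 * f s" if "u \<in> {s..t}" for u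
  proof -
    have "\<bar>f u - f s\<bar> \<le> 1/1000*\<bar>u - s\<bar>" using S(4)[OF sI that] .
    moreover have "\<bar>u - s\<bar> \<le> 10 * f s" using that t2 fs by auto
    ultimately have "\<bar>f u - f s\<bar> \<le> 1/100 * f s" using lin2 by blast
    then show ?thesis unfolding abs_le_iff by linarith
  qed
  define \<phi> where "\<phi> u = fst (W_p (u, f u))" for u
  define \<psi> where "\<psi> u = snd (W_p (u, f u))" for u
  show "\<exists>g c d. flat_arc (1/1000) (upper_half (1/10000)) g c d \<and> (c, g c) \<in> faceNW (1/10000) \<and> (d, g d) \<in> faceNE (1/10000) \<and>
        graph_on g {c..d} \<subseteq> W_p ` graph_on f {s..t} \<and>
        (\<forall>p\<in>graph_on g {c..d}. \<forall>q\<in>graph_on f {s..t}. \<bar>snd p\<bar> < \<bar>snd q\<bar> / 4) \<and>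
        (\<forall>x1 x2. x1 \<in> {s..t} \<and> x2 \<in> {s..t} \<and> W_p (x1, f x1) = (c, g c) \<and> W_p (x2, f x2) = (d, g d) \<longrightarrow>
           (\<forall>x D. min x1 x2 < x \<and> x < max x1 x2 \<and>
                  ((\<lambda>u. fst (W_p (u, f u))) has_real_derivative D) (at x) \<longrightarrow> D > 1))"
  proof (rule arc_core[where \<phi>=\<phi> and \<psi>=\<psi> and m="1 + f s/8"])
    show "s \<le> t" by (rule S(1))
    show "continuous_on {s..t} \<phi>" unfolding \<phi>_def using cont_Wp[OF S(2) S(3)] by simp
    show "continuous_on {s..t} \<psi>" unfolding \<psi>_def using cont_Wp[OF S(2) S(3)] by simp
    show "1 < 1 + f s/8" using fs by simp
    show "0 < (1/1000::real)" "(1/1000::real) < 1/10" by auto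
    show "\<And>u. W_p (u, f u) = (\<phi> u, \<psi> u)" unfolding \<phi>_def \<psi>_def by simp
    fix u v assume uv: "s \<le> u" "u < v" "v \<le> t"
    have uI: "u \<in> {s..t}" and vI: "v \<in> {s..t}" using uv by auto
    have yl: "\<bar>f v - f u\<bar> \<le> 1/1000*(v-u)" using S(4)[OF uI vI] uv by simp
    note pp = p_pair[OF S(3)[OF uI] S(3)[OF vI] uv(2) yl]
    have "f s / 8 \<le> omega_p u (f u)" using omp_bounds[OF S(3)[OF uI]] fb[OF uI] fs by linarith
    then have "(1 + f s/8)*(v-u) \<le> (v-u)*(1 + omega_p u (f u))" using uv by (simp add: mult.commute mult_left_mono)
    then show "(1 + f s/8)*(v-u) \<le> \<phi> v - \<phi> u" using pp(1) unfolding \<phi>_def by linarith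
    show "\<bar>\<psi> v - \<psi> u\<bar> \<le> 1/1000*(\<phi> v - \<phi> u)" using pp(2) unfolding \<phi>_def \<psi>_def by simp
  next
    have "s = 2 - 10 * f s" using fs by simp
    then show "\<phi> s + 10*\<psi> s \<le> 2" unfolding \<phi>_def \<psi>_def by (rule p_left_end[OF fs(2) fs(3)])
  next
    have "0 < f t" "f t \<le> 1/10000" using S(3)[OF tI] unfolding reg_def by auto
    then show "\<phi> t - 10*\<psi> t \<ge> 2" unfolding \<phi>_def \<psi>_def t2 using p_right_end[of "f 2"] t2 by simp
  next
    fix u assume uI: "u \<in> {s..t}"
    note R = S(3)[OF uI]
    have ps: "0 < \<psi> u" "\<psi> u \<le> 7*(f u)^2" using p_psi[OF R] unfolding \<psi>_def by auto
    have "(f u)^2 \<le> (101/100 * f s)^2" using fb[OF uI] R unfolding reg_def by (intro power_mono) auto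
    also have "\<dots> = (10201/10000) * f s * f s" by (simp add: power2_eq_square)
    also have "\<dots> \<le> (10201/10000) * f s * (1/10000)" using fs by (intro mult_left_mono) auto
    finally have fu2: "(f u)^2 \<le> (10201/100000000) * f s" by simp
    show "0 < \<psi> u \<and> \<psi> u \<le> 1/10000" using ps fu2 fs by linarith
    fix v assume vI: "v \<in> {s..t}"
    have "f v \<ge> 99/100 * f s" using fb[OF vI] by simp
    then show "\<psi> u < \<bar>f v\<bar>/4" using ps fu2 fs by linarith
  qed
qed

lemma flat_arc_neg:
  assumes "flat_arc L (lower_half a) f s t"
  shows "flat_arc L (upper_half a) (\<lambda>x. - f x) s t"
proof -
  have l: "L-lipschitz_on {s..t} f" and g: "graph_on f {s..t} \<subseteq> lower_half a" and st: "s \<le> t"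
    using assms unfolding flat_arc_def by auto
  have "L-lipschitz_on {s..t} (\<lambda>x. - f x)"
    using l unfolding lipschitz_on_def by (simp add: dist_real_def abs_minus_commute)
  moreover have "graph_on (\<lambda>x. - f x) {s..t} \<subseteq> upper_half a"
    using g unfolding graph_on_def upper_half_def lower_half_def wedgeV_def by auto
  ultimately show ?thesis using st unfolding flat_arc_def by auto
qed

lemma flat_arc_neg2:
  assumes "flat_arc L (upper_half a) f s t"
  shows "flat_arc L (lower_half a) (\<lambda>x. - f x) s t"
proof -
  have l: "L-lipschitz_on {s..t} f" and g: "graph_on f {s..t} \<subseteq> upper_half a" and st: "s \<le> t"
    using assms unfolding flat_arc_def by auto
  have "L-lipschitz_on {s..t} (\<lambda>x. - f x)"
    using l unfolding lipschitz_on_def by (simp add: dist_real_def abs_minus_commute)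
  moreover have "graph_on (\<lambda>x. - f x) {s..t} \<subseteq> lower_half a"
    using g unfolding graph_on_def upper_half_def lower_half_def wedgeV_def by auto
  ultimately show ?thesis using st unfolding flat_arc_def by auto
qed

lemma refl_claim:
  assumes Wr: "\<And>x y. W (x, -y) = (fst (W (x,y)), - snd (W (x,y)))"
    and claim: "arc_claim W L (upper_half a) A0 B0 A1 B1"
    and hA0: "\<And>x y. (x, y) \<in> A0' \<Longrightarrow> (x, -y) \<in> A0"
    and hB0: "\<And>x y. (x, y) \<in> B0' \<Longrightarrow> (x, -y) \<in> B0"
    and hA1: "\<And>x y. (x, y) \<in> A1 \<Longrightarrow> (x, -y) \<in> A1'"
    and hB1: "\<And>x y. (x, y) \<in> B1 \<Longrightarrow> (x, -y) \<in> B1'"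
  shows "arc_claim W L (lower_half a) A0' B0' A1' B1'"
  unfolding arc_claim_def
proof (intro allI impI)
  fix f s t
  assume A: "flat_arc L (lower_half a) f s t \<and> (s, f s) \<in> A0' \<and> (t, f t) \<in> B0'"
  define f' where "f' = (\<lambda>x. - f x)"
  have A': "flat_arc L (upper_half a) f' s t \<and> (s, f' s) \<in> A0 \<and> (t, f' t) \<in> B0"
    unfolding f'_def using flat_arc_neg[of L a f s t] A hA0 hB0 by auto
  obtain g c d where G: "flat_arc L (upper_half a) g c d" "(c, g c) \<in> A1" "(d, g d) \<in> B1"
    "graph_on g {c..d} \<subseteq> W ` graph_on f' {s..t}"
    "\<forall>p\<in>graph_on g {c..d}. \<forall>q\<in>graph_on f' {s..t}. \<bar>snd p\<bar> < \<bar>snd q\<bar> / 4"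
    "\<forall>x1 x2. x1 \<in> {s..t} \<and> x2 \<in> {s..t} \<and> W (x1, f' x1) = (c, g c) \<and> W (x2, f' x2) = (d, g d) \<longrightarrow>
           (\<forall>x D. min x1 x2 < x \<and> x < max x1 x2 \<and>
                  ((\<lambda>u. fst (W (u, f' u))) has_real_derivative D) (at x) \<longrightarrow> D > 1)"
    using claim A' unfolding arc_claim_def by blast
  have Wf': "W (u, f' u) = (fst (W (u, f u)), - snd (W (u, f u)))" for u
    unfolding f'_def by (rule Wr)
  have fstf: "(\<lambda>u. fst (W (u, f' u))) = (\<lambda>u. fst (W (u, f u)))" using Wf' by simp
  show "\<exists>g c d. flat_arc L (lower_half a) g c d \<and> (c, g c) \<in> A1' \<and> (d, g d) \<in> B1' \<and>
        graph_on g {c..d} \<subseteq> W ` graph_on f {s..t} \<and>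
        (\<forall>p\<in>graph_on g {c..d}. \<forall>q\<in>graph_on f {s..t}. \<bar>snd p\<bar> < \<bar>snd q\<bar> / 4) \<and>
        (\<forall>x1 x2. x1 \<in> {s..t} \<and> x2 \<in> {s..t} \<and> W (x1, f x1) = (c, g c) \<and> W (x2, f x2) = (d, g d) \<longrightarrow>
           (\<forall>x D. min x1 x2 < x \<and> x < max x1 x2 \<and>
                  ((\<lambda>u. fst (W (u, f u))) has_real_derivative D) (at x) \<longrightarrow> D > 1))"
  proof (intro exI conjI)
    show "flat_arc L (lower_half a) (\<lambda>x. - g x) c d" using flat_arc_neg2[OF G(1)] .
    show "(c, - g c) \<in> A1'" using hA1[OF G(2)] .
    show "(d, - g d) \<in> B1'" using hB1[OF G(3)] .
    show "graph_on (\<lambda>x. - g x) {c..d} \<subseteq> W ` graph_on f {s..t}"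
    proof
      fix p assume "p \<in> graph_on (\<lambda>x. - g x) {c..d}"
      then obtain z where z: "z \<in> {c..d}" "p = (z, - g z)" unfolding graph_on_def by auto
      have "(z, g z) \<in> W ` graph_on f' {s..t}" using G(4) z unfolding graph_on_def by auto
      then obtain u where u: "u \<in> {s..t}" "(z, g z) = W (u, f' u)" unfolding graph_on_def by auto
      then have "p = W (u, f u)" using z Wf'[of u] by (metis fst_conv minus_minus prod.collapse snd_conv)
      then show "p \<in> W ` graph_on f {s..t}" using u unfolding graph_on_def by auto
    qed
    show "\<forall>p\<in>graph_on (\<lambda>x. - g x) {c..d}. \<forall>q\<in>graph_on f {s..t}. \<bar>snd p\<bar> < \<bar>snd q\<bar> / 4"
    proof (intro ballI)
      fix p q assume p: "p \<in> graph_on (\<lambda>x. - g x) {c..d}" and q: "q \<in> graph_on f {s..t}"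
      obtain z where z: "z \<in> {c..d}" "p = (z, - g z)" using p unfolding graph_on_def by auto
      obtain v where v: "v \<in> {s..t}" "q = (v, f v)" using q unfolding graph_on_def by auto
      have "\<bar>snd (z, g z)\<bar> < \<bar>snd (v, f' v)\<bar> / 4"
        using G(5) z v unfolding graph_on_def by auto
      then show "\<bar>snd p\<bar> < \<bar>snd q\<bar> / 4" using z v unfolding f'_def by simp
    qed
    show "\<forall>x1 x2. x1 \<in> {s..t} \<and> x2 \<in> {s..t} \<and> W (x1, f x1) = (c, - g c) \<and> W (x2, f x2) = (d, - g d) \<longrightarrow>
           (\<forall>x D. min x1 x2 < x \<and> x < max x1 x2 \<and>
                  ((\<lambda>u. fst (W (u, f u))) has_real_derivative D) (at x) \<longrightarrow> D > 1)"
    proof (intro allI impI)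
      fix x1 x2 x D
      assume H1: "x1 \<in> {s..t} \<and> x2 \<in> {s..t} \<and> W (x1, f x1) = (c, - g c) \<and> W (x2, f x2) = (d, - g d)"
      assume H2: "min x1 x2 < x \<and> x < max x1 x2 \<and> ((\<lambda>u. fst (W (u, f u))) has_real_derivative D) (at x)"
      have "W (x1, f' x1) = (c, g c)" using H1 Wf'[of x1] by simp
      moreover have "W (x2, f' x2) = (d, g d)" using H1 Wf'[of x2] by simp
      ultimately show "D > 1" using G(6) H1 H2 fstf by auto
    qed
  qed
qed

lemma faces_refl:
  "\<And>x y. (x, y) \<in> faceSW a \<Longrightarrow> (x, -y) \<in> faceNW a"
  "\<And>x y. (x, y) \<in> faceSE a \<Longrightarrow> (x, -y) \<in> faceNE a"
  "\<And>x y. (x, y) \<in> faceNW a \<Longrightarrow> (x, -y) \<in> faceSW a"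
  "\<And>x y. (x, y) \<in> faceNE a \<Longrightarrow> (x, -y) \<in> faceSE a"
  "\<And>x y. (x, y) \<in> line_x2 \<Longrightarrow> (x, -y) \<in> line_x2"
  unfolding faceSW_def faceNW_def faceSE_def faceNE_def line_x2_def by auto

lemma gdiff: fixes a b :: real assumes "0 \<le> a" "0 \<le> b"
  shows "(1-b)/(1+b) - (1-a)/(1+a) = 2*(a-b)/((1+a)*(1+b))"
  using assms by (simp add: field_simps)

lemma jdiff2: fixes a b :: real assumes "a < 1" "b < 1"
  shows "a/(1-a) - b/(1-b) = (a-b)/((1-a)*(1-b))"
  using assms by (simp add: field_simps)

lemma lin3: fixes D E P :: real
  shows "E \<ge> 0 \<Longrightarrow> D > 0 \<Longrightarrow> P \<ge> (998/1000)*D + (397/100)*E \<Longrightarrow> E \<ge> D/200 \<Longrightarrow> P \<ge> (101/100)*D"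
  by linarith

lemma lin4: fixes D E P A :: real
  shows "A \<le> 2/1000*(1/1000*D) + (1/10000)*(10021/10000*E) \<Longrightarrow> E \<ge> 0 \<Longrightarrow> D > 0
    \<Longrightarrow> P \<ge> (998/1000)*D + (397/100)*E \<Longrightarrow> A \<le> 1/1000*P"
  by linarith

lemma m_step_alg:
  fixes x y x' y' n n' :: real
  assumes x: "1999/1000 \<le> x" "x < x'" and n: "0 \<le> n'" "n' \<le> n - (x'-x)/200" "n \<le> 1/1000"
    and y: "0 < y" "y \<le> 1/10000" and yl: "\<bar>y' - y\<bar> \<le> 1/1000*(x'-x)"
  shows "(101/100)*(x'-x) \<le> (1-n')/(1+n')*x' - (1-n)/(1+n)*x"
    and "\<bar>n'/(1-n')*y' - n/(1-n)*y\<bar> \<le> 1/1000*((1-n')/(1+n')*x' - (1-n)/(1+n)*x)"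
proof -
  define D where "D = x' - x"
  define E where "E = n - n'"
  have D: "D > 0" unfolding D_def using x by simp
  have E: "E \<ge> D/200" unfolding E_def D_def using n by linarith
  have E0: "E \<ge> 0" using E D by simp
  have n0: "0 \<le> n" using n(1) E0 unfolding E_def by linarith
  define G where "G = (1-n)/(1+n)"
  define G' where "G' = (1-n')/(1+n')"
  have Gd: "G' - G = 2*E/((1+n)*(1+n'))" unfolding G_def G'_def E_def using n n0 by (intro gdiff) auto
  have den: "0 < (1+n)*(1+n')" "(1+n)*(1+n') \<le> 10021/10000"
  proof -
    show "0 < (1+n)*(1+n')" using n n0 by simp
    have "(1+n)*(1+n') \<le> (1 + 1/1000)*(1+1/1000)" using n n0 E0 unfolding E_def by (intro mult_mono) auto
    then show "(1+n)*(1+n') \<le> 10021/10000" by simp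
  qed
  have Gd2: "G' - G \<ge> (199/100)*E"
  proof -
    have "(199/100)*E*((1+n)*(1+n')) \<le> (199/100)*E*(10021/10000)" using den E0 by (intro mult_left_mono) auto
    also have "\<dots> \<le> 2*E" using E0 by simp
    finally have "(199/100)*E \<le> 2*E/((1+n)*(1+n'))" using den by (subst pos_le_divide_eq) auto
    then show ?thesis using Gd by simp
  qed
  have G'b: "G' \<ge> 998/1000"
  proof -
    have "(998/1000)*(1+n') \<le> 1 - n'" using n n0 E0 unfolding E_def by simp
    then show ?thesis unfolding G'_def using n by (subst pos_le_divide_eq) auto
  qed
  have split: "G'*x' - G*x = D*G' + x*(G'-G)" unfolding D_def by (simp add: algebra_simps)
  have t1: "x*(G'-G) \<ge> x*((199/100)*E)" using Gd2 x by (intro mult_left_mono) auto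
  have t2: "x*((199/100)*E) \<ge> (397/100)*E"
  proof -
    have "(397/100)*E \<le> ((199/100)*x)*E" using x E0 by (intro mult_right_mono) auto
    then show ?thesis by (simp add: algebra_simps)
  qed
  have t3: "D*G' \<ge> D*(998/1000)" using G'b D by (intro mult_left_mono) auto
  have main: "G'*x' - G*x \<ge> (998/1000)*D + (397/100)*E" unfolding split using t1 t2 t3 by (simp add: mult.commute)
  show "(101/100)*(x'-x) \<le> (1-n')/(1+n')*x' - (1-n)/(1+n)*x"
    using lin3[OF E0 D main E] unfolding G_def G'_def D_def by (simp add: mult.commute)
  define J where "J = n/(1-n)"
  define J' where "J' = n'/(1-n')"
  have n1: "n < 1" "n' < 1" using n n0 E0 unfolding E_def by auto
  have Jd: "J - J' = E/((1-n)*(1-n'))" unfolding J_def J'_def E_def by (rule jdiff2[OF n1])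
  have denJ: "(1-n)*(1-n') \<ge> 998/1000"
  proof -
    have "(999/1000)*(999/1000) \<le> (1-n)*(1-n')" using n n0 E0 unfolding E_def by (intro mult_mono) auto
    then show ?thesis by simp
  qed
  have Jd2: "J - J' \<le> (10021/10000)*E" "0 \<le> J - J'"
  proof -
    have "E \<le> (10021/10000)*E*((1-n)*(1-n'))"
    proof -
      have "E*1 \<le> E*((10021/10000)*((1-n)*(1-n')))" using E0 denJ by (intro mult_left_mono) auto
      then show ?thesis by (simp add: algebra_simps)
    qed
    then show "J - J' \<le> (10021/10000)*E" unfolding Jd using denJ by (subst pos_divide_le_eq) auto
    show "0 \<le> J - J'" unfolding Jd using denJ E0 by simp
  qed
  have J'b: "0 \<le> J'" "J' \<le> 2/1000"
  proof -
    show "0 \<le> J'" unfolding J'_def using n n1 by simp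
    have "n' \<le> 2/1000*(1-n')" using n n0 E0 unfolding E_def by simp
    then show "J' \<le> 2/1000" unfolding J'_def using n1 by (subst pos_divide_le_eq) auto
  qed
  have splitJ: "J'*y' - J*y = J'*(y'-y) - y*(J-J')" by (simp add: algebra_simps)
  have a1: "\<bar>J'*(y'-y)\<bar> \<le> 2/1000*(1/1000*D)"
  proof -
    have "\<bar>J'*(y'-y)\<bar> = J' * \<bar>y'-y\<bar>" using J'b by (simp add: abs_mult)
    also have "\<dots> \<le> (2/1000) * (1/1000*D)" using J'b yl unfolding D_def by (intro mult_mono) auto
    finally show ?thesis .
  qed
  have a2: "\<bar>y*(J-J')\<bar> \<le> (1/10000)*((10021/10000)*E)"
  proof -
    have "\<bar>y*(J-J')\<bar> = y*(J-J')" using y Jd2 by simp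
    also have "\<dots> \<le> (1/10000)*((10021/10000)*E)" using y Jd2 by (intro mult_mono) auto
    finally show ?thesis .
  qed
  have "\<bar>J'*y' - J*y\<bar> \<le> 2/1000*(1/1000*D) + (1/10000)*((10021/10000)*E)"
    using splitJ a1 a2 abs_triangle_ineq4[of "J'*(y'-y)" "y*(J-J')"] by linarith
  from lin4[OF this E0 D main]
  show "\<bar>n'/(1-n')*y' - n/(1-n)*y\<bar> \<le> 1/1000*((1-n')/(1+n')*x' - (1-n)/(1+n)*x)"
    unfolding J_def J'_def G_def G'_def .
qed

lemma m_quant_alg:
  fixes x x' y y' n R Bp :: real
  assumes x: "1999/1000 \<le> x" "x < x'" "x' \<le> 2001/1000"
    and y: "0 < y" "y \<le> 1/10000" "0 < y'" "y' \<le> 103/100*y"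
    and n: "y/4 \<le> n" "n \<le> 7*y" "n \<le> 1/1000"
    and yl: "\<bar>y' - y\<bar> \<le> 1/1000*(x'-x)"
    and R: "0 < R" "R \<le> 801/100"
    and Bp: "\<bar>Bp\<bar> \<le> 41*y'"
  shows "(x'^2-x^2)*(n^2+n) + 4*(x'^2*y'^2 - x^2*y^2)*(n^2-1) - ((x'-x)/200)*(2*R*n - Bp) + R*((x'-x)/200)^2 \<ge> 0"
proof -
  define D where "D = x' - x"
  have D: "D > 0" unfolding D_def using x by simp
  have yD: "y*D > 0" using y D by simp
  have n0: "n \<ge> 0" using n y by linarith
  have e1: "x'^2 - x^2 = (x'+x)*D" unfolding D_def by (simp add: power2_eq_square algebra_simps)
  have "(3998/1000)*D \<le> (x'+x)*D" using x D by (intro mult_right_mono) auto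
  moreover have "y/4 \<le> n^2 + n" using n n0 by (simp add: add_increasing)
  ultimately have "((3998/1000)*D)*(y/4) \<le> ((x'+x)*D)*(n^2+n)" using y D by (intro mult_mono) auto
  then have T1: "(x'^2-x^2)*(n^2+n) \<ge> (3998/4000)*(y*D)" unfolding e1 by (simp add: algebra_simps)
  define P where "P = x'*y' - x*y"
  define S where "S = x'*y' + x*y"
  have CS: "x'^2*y'^2 - x^2*y^2 = P*S" unfolding P_def S_def by (simp add: power2_eq_square algebra_simps)
  have Spos: "S > 0" unfolding S_def using x y by (simp add: add_pos_pos)
  have n2: "n^2 - 1 \<le> 0" "n^2 - 1 \<ge> -1"
  proof -
    have "n^2 \<le> 1" using n n0 by (simp add: power_le_one)
    then show "n^2 - 1 \<le> 0" by simp
    show "n^2 - 1 \<ge> -1" by simp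
  qed
  have T2: "4*(x'^2*y'^2 - x^2*y^2)*(n^2-1) \<ge> -(35/1000)*(y*D)"
  proof (cases "P \<le> 0")
    case True
    then have "P*S \<le> 0" using Spos by (simp add: mult_nonpos_nonneg)
    then have "4*(P*S)*(n^2-1) \<ge> 0" using n2 by (simp add: mult_nonpos_nonpos)
    then show ?thesis unfolding CS using yD by linarith
  next
    case False
    have "y' - y \<le> 1/1000*D" using yl[unfolded abs_le_iff] unfolding D_def by linarith
    then have "x'*(y'-y) \<le> x'*(1/1000*D)" using x by (intro mult_left_mono) auto
    also have "\<dots> \<le> (2001/1000)*(1/1000*D)" using x D by (intro mult_right_mono) auto
    finally have "x'*(y'-y) \<le> (2001/1000)*(1/1000*D)" .
    moreover have "P = x'*(y'-y) + y*D" unfolding P_def D_def by (simp add: algebra_simps)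
    moreover have "y*D \<le> (1/10000)*D" using y D by (intro mult_right_mono) auto
    ultimately have Pb: "P \<le> (2101/1000000)*D" by linarith
    have Sb: "S \<le> (40621/10000)*y"
    proof -
      have "x'*y' \<le> (2001/1000)*((103/100)*y)" using x y by (intro mult_mono) auto
      also have "\<dots> = (206103/100000)*y" by simp
      finally have "x'*y' \<le> (206103/100000)*y" .
      moreover have "x*y \<le> (2001/1000)*y" using x y by (intro mult_right_mono) auto
      ultimately show ?thesis unfolding S_def using y by linarith
    qed
    have "P*S \<le> ((2101/1000000)*D)*((40621/10000)*y)" using Pb Sb False Spos by (intro mult_mono) auto
    also have "\<dots> = (2101/1000000)*(40621/10000)*(y*D)" by (simp add: algebra_simps)
    finally have PS: "P*S \<le> (86/10000)*(y*D)" using yD by simp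
    have PS0: "P*S \<ge> 0" using False Spos by simp
    have "4*(P*S)*(n^2-1) \<ge> 4*(P*S)*(-1)" using n2 PS0 by (intro mult_left_mono) auto
    then show ?thesis unfolding CS using PS yD by linarith
  qed
  have T3: "(D/200)*(2*R*n - Bp) \<le> (78/100)*(y*D)"
  proof -
    have "R*n \<le> (801/100)*(7*y)" using R n n0 by (intro mult_mono) auto
    moreover have "-Bp \<le> 41*y'" using Bp by linarith
    moreover have "41*y' \<le> 41*((103/100)*y)" using y by simp
    ultimately have "2*R*n - Bp \<le> 155*y" using y by linarith
    then have "(D/200)*(2*R*n - Bp) \<le> (D/200)*(155*y)" using D by (intro mult_left_mono) auto
    moreover have "(D/200)*(155*y) = (155/200)*(y*D)" by simp
    ultimately show ?thesis using yD by linarith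
  qed
  have T4: "R*((x'-x)/200)^2 \<ge> 0" using R by simp
  show ?thesis using T1 T2 T3 T4 yD unfolding D_def[symmetric] by linarith
qed

definition nu :: "real \<Rightarrow> real \<Rightarrow> real" where
  "nu x y = wr (r1sq x y) (4-x^2) (4*x^2*y^2)"

lemma omega_m_nu: "omega_m x y = - nu x y"
  unfolding nu_def omega_m_wr ..

lemma nu_nonneg: "nu x y \<ge> 0"
  unfolding nu_def by (rule wr_nonneg[OF r1sq_pos]) simp

lemma nu_bounds: assumes "reg x y" shows "y/4 \<le> nu x y" "nu x y \<le> 7*y"
  using wr_bounds[OF assms, of "4-x^2"] reg_basic[OF assms] unfolding nu_def by auto

lemma Wm_fst: "fst (W_m (x,y)) = (1 - nu x y)/(1 + nu x y) * x"
  unfolding W_m_def omega_m_nu by simp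
lemma Wm_snd: "snd (W_m (x,y)) = nu x y/(1 - nu x y) * y"
  unfolding W_m_def omega_m_nu using nu_nonneg[of x y] by simp

lemma lin5: fixes a b d :: real shows "a - b \<le> 1/1000*d \<Longrightarrow> d \<le> 10*a + 10*b \<Longrightarrow> 0 < b \<Longrightarrow> a \<le> 103/100*b"
  by linarith

lemma lin6: fixes d a b :: real shows "d \<le> 10*a + 10*b \<Longrightarrow> a \<le> 103/100*b \<Longrightarrow> 0 < b \<Longrightarrow> d/200 \<le> (203/2000)*b"
  by linarith

lemma m_quant:
  assumes R: "reg x y" and R': "reg x' y'" and xx: "x < x'" and yl: "\<bar>y' - y\<bar> \<le> 1/1000*(x'-x)"
  shows "nu x' y' \<le> nu x y - (x'-x)/200"
proof -
  note b = reg_basic[OF R] and b' = reg_basic[OF R']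
  define n where "n = nu x y"
  define dl where "dl = (x'-x)/200"
  have nb: "y/4 \<le> n" "n \<le> 7*y" using nu_bounds[OF R] unfolding n_def by auto
  have C: "4*x^2*y^2 \<ge> 0" "4*x'^2*y'^2 \<ge> 0" by auto
  have eq: "r1sq x y * n^2 - (4-x^2) * n - 4*x^2*y^2 = 0"
    unfolding n_def nu_def by (rule wr_eq[OF r1sq_pos C(1)])
  have dx: "x' - x \<le> 10*y' + 10*y" using R R' unfolding reg_def by (auto simp: abs_le_iff)
  have yy: "y' \<le> 103/100*y"
  proof -
    have "y' - y \<le> 1/1000*(x'-x)" using yl[unfolded abs_le_iff] by linarith
    then show ?thesis using dx b(1) lin5 by blast
  qed
  have dlb: "dl \<le> (203/2000)*y" unfolding dl_def using lin6[OF dx yy b(1)] .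
  have vpos: "n - dl > 0" using nb dlb b by linarith
  have K: "(x'^2-x^2)*(n^2+n) + 4*(x'^2*y'^2 - x^2*y^2)*(n^2-1) - dl*(2*r1sq x' y'*n - (4-x'^2)) + r1sq x' y'*dl^2 \<ge> 0"
    unfolding dl_def
    by (rule m_quant_alg) (use b b' xx yy nb yl r1sq_pos[of x' y'] in auto)
  have "r1sq x' y' * (n-dl)^2 - (4-x'^2) * (n-dl) - 4*x'^2*y'^2
      = (r1sq x' y' * (n-dl)^2 - (4-x'^2) * (n-dl) - 4*x'^2*y'^2) - (r1sq x y * n^2 - (4-x^2) * n - 4*x^2*y^2)"
    using eq by simp
  also have "\<dots> = (x'^2-x^2)*(n^2+n) + 4*(x'^2*y'^2 - x^2*y^2)*(n^2-1) - dl*(2*r1sq x' y'*n - (4-x'^2)) + r1sq x' y'*dl^2"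
    unfolding r1sq_def by (simp add: power2_eq_square algebra_simps)
  finally have "r1sq x' y' * (n-dl)^2 - (4-x'^2) * (n-dl) - 4*x'^2*y'^2 \<ge> 0" using K by simp
  then have "nu x' y' \<le> n - dl" unfolding nu_def by (rule wr_ge[OF r1sq_pos C(2) vpos])
  then show ?thesis unfolding n_def dl_def .
qed

lemma m_pair:
  assumes R: "reg x y" and R': "reg x' y'" and xx: "x < x'" and yl: "\<bar>y' - y\<bar> \<le> 1/1000*(x'-x)"
  shows "(101/100)*(x'-x) \<le> fst (W_m (x',y')) - fst (W_m (x,y))"
    "\<bar>snd (W_m (x',y')) - snd (W_m (x,y))\<bar> \<le> 1/1000*(fst (W_m (x',y')) - fst (W_m (x,y)))"
proof -
  note b = reg_basic[OF R] and b' = reg_basic[OF R']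
  have q: "nu x' y' \<le> nu x y - (x'-x)/200" by (rule m_quant[OF R R' xx yl])
  have nb: "nu x y \<le> 7*y" using nu_bounds[OF R] by auto
  have n1: "nu x y \<le> 1/1000" using nb b by linarith
  note st = m_step_alg[of x x' "nu x' y'" "nu x y" y y', OF _ xx nu_nonneg q n1 _ _ yl]
  show "(101/100)*(x'-x) \<le> fst (W_m (x',y')) - fst (W_m (x,y))"
    unfolding Wm_fst using st b by simp
  show "\<bar>snd (W_m (x',y')) - snd (W_m (x,y))\<bar> \<le> 1/1000*(fst (W_m (x',y')) - fst (W_m (x,y)))"
    unfolding Wm_fst Wm_snd using st b by simp
qed

lemma gb: fixes n :: real assumes "0 \<le> n" "n \<le> 1/2"
  shows "(1-n)/(1+n) \<le> 1 - n" "1 - 2*n \<le> (1-n)/(1+n)" "n/(1-n) \<le> 2*n" "0 \<le> n/(1-n)"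
proof -
  have nn: "n*n \<le> n" using mult_left_mono[of n 1 n] assms by simp
  have "1 - n \<le> (1-n)*(1+n)" using assms nn by (simp add: algebra_simps)
  then show "(1-n)/(1+n) \<le> 1 - n" using assms by (subst pos_divide_le_eq) auto
  have "(1 - 2*n)*(1+n) \<le> 1 - n" using assms nn by (simp add: algebra_simps)
  then show "1 - 2*n \<le> (1-n)/(1+n)" using assms by (subst pos_le_divide_eq) auto
  have "n*n \<le> n*(1/2)" using mult_left_mono[of n "1/2" n] assms by simp
  then have "n \<le> 2*n*(1-n)" using assms by (simp add: algebra_simps)
  then show "n/(1-n) \<le> 2*n" using assms by (subst pos_divide_le_eq) auto
  show "0 \<le> n/(1-n)" using assms by simp
qed

lemma m_left_end:
  assumes y: "0 < y" "y \<le> 1/10000"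
  shows "fst (W_m (2,y)) + 10 * snd (W_m (2,y)) \<le> 2"
proof -
  have R: "reg 2 y" unfolding reg_def using y by simp
  define n where "n = nu 2 y"
  have n0: "n \<ge> 0" "n \<le> 7*y" using nu_bounds[OF R] nu_nonneg unfolding n_def by auto
  have n1: "n \<le> 1/2" using n0 y by linarith
  note g = gb[OF n0(1) n1]
  have p1: "(1-n)/(1+n)*2 \<le> (1-n)*2" using g(1) by (rule mult_right_mono) simp
  have "n/(1-n)*y \<le> (2*n)*y" using g(3) y by (intro mult_right_mono) auto
  also have "\<dots> \<le> (2*n)*(1/10000)" using y n0 by (intro mult_left_mono) auto
  finally have p2: "n/(1-n)*y \<le> n/5000" by simp
  have F: "fst (W_m (2,y)) = (1-n)/(1+n)*2" unfolding Wm_fst n_def by simp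
  have S: "snd (W_m (2,y)) = n/(1-n)*y" unfolding Wm_snd n_def by simp
  have "(1-n)*2 = 2 - 2*n" by simp
  then show ?thesis unfolding F S using p1 p2 n0 by linarith
qed

lemma m_right_end:
  assumes y: "0 < y" "y \<le> 1/10000" and x: "x = 2 + 10*y"
  shows "fst (W_m (x,y)) - 10 * snd (W_m (x,y)) \<ge> 2"
proof -
  have R: "reg x y" unfolding reg_def using y x by simp
  note b = reg_basic[OF R]
  define n where "n = nu x y"
  have n0: "n \<ge> 0" using nu_nonneg unfolding n_def by auto
  have C: "4*x^2*y^2 \<ge> 0" by simp
  have e: "4 - x^2 = -10*y*(x+2)" unfolding x by (simp add: power2_eq_square algebra_simps)
  have "r1sq x y * y^2 - (4-x^2)*y - 4*x^2*y^2 = r1sq x y * y^2 + 10*((x+2)*y^2) - 4*(x^2*y^2)"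
    unfolding e by (simp add: power2_eq_square algebra_simps)
  also have "\<dots> \<ge> 0"
  proof -
    have "r1sq x y * y^2 \<ge> 0" using r1sq_pos[of x y] by simp
    moreover have "(x+2)*y^2 \<ge> 3*y^2" using b by (intro mult_right_mono) auto
    moreover have "x^2*y^2 \<le> 4005/1000*y^2" using b by simp
    moreover have "y^2 \<ge> 0" by simp
    ultimately show ?thesis by linarith
  qed
  finally have ny: "n \<le> y" unfolding n_def nu_def using wr_ge[OF r1sq_pos C y(1)] by simp
  have n1: "n \<le> 1/2" using ny y by linarith
  note g = gb[OF n0 n1]
  have "(1 - 2*n)*x \<le> (1-n)/(1+n)*x" using g(2) b by (intro mult_right_mono) auto
  moreover have "(2*n)*x \<le> (2*y)*(2001/1000)" using ny n0 b by (intro mult_mono) auto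
  moreover have "(1 - 2*n)*x = x - (2*n)*x" by (simp add: algebra_simps)
  ultimately have p1: "(1-n)/(1+n)*x \<ge> x - (2*y)*(2001/1000)" by linarith
  have "n/(1-n)*y \<le> (2*n)*y" using g(3) y by (intro mult_right_mono) auto
  also have "\<dots> \<le> (2*y)*(1/10000)" using y n0 ny by (intro mult_mono) auto
  finally have p2: "n/(1-n)*y \<le> y/5000" by simp
  have F: "fst (W_m (x,y)) = (1-n)/(1+n)*x" unfolding Wm_fst n_def by simp
  have S: "snd (W_m (x,y)) = n/(1-n)*y" unfolding Wm_snd n_def by simp
  show ?thesis unfolding F S using p1 p2 x y by linarith
qed

lemma m_psi:
  assumes R: "reg x y"
  shows "0 < snd (W_m (x,y))" "snd (W_m (x,y)) \<le> 14*y^2"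
proof -
  note b = reg_basic[OF R]
  define n where "n = nu x y"
  have n0: "n \<ge> y/4" "n \<le> 7*y" using nu_bounds[OF R] unfolding n_def by auto
  have np: "n > 0" using n0 b by linarith
  have n1: "n \<le> 1/2" using n0 b by linarith
  note g = gb[of n] 
  have S: "snd (W_m (x,y)) = n/(1-n)*y" unfolding Wm_snd n_def by simp
  show "0 < snd (W_m (x,y))" unfolding S using np n1 b by simp
  have "n/(1-n)*y \<le> (2*n)*y" using g(3) np n1 b by (intro mult_right_mono) auto
  also have "\<dots> \<le> (2*(7*y))*y" using n0 b by (intro mult_right_mono) auto
  finally show "snd (W_m (x,y)) \<le> 14*y^2" unfolding S by (simp add: power2_eq_square)
qed

lemma cont_omega_m:
  assumes "continuous_on S f"
  shows "continuous_on S (\<lambda>u. omega_m u (f u))"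
proof -
  have rne: "\<And>u v. 2 * (4 + u^2 + 4*u^2 * v^2) \<noteq> (0::real)"
    using r1sq_pos unfolding r1sq_def by (metis mult_eq_0_iff not_less_iff_gr_or_eq zero_neq_numeral)
  show ?thesis unfolding omega_m_def Delta_def r1sq_def
    by (intro continuous_intros assms) (use rne in auto)
qed

lemma cont_Wm:
  assumes cf: "continuous_on {s..t} f" and R: "\<And>u. u \<in> {s..t} \<Longrightarrow> reg u (f u)"
  shows "continuous_on {s..t} (\<lambda>u. fst (W_m (u, f u)))" "continuous_on {s..t} (\<lambda>u. snd (W_m (u, f u)))"
proof -
  have co: "continuous_on {s..t} (\<lambda>u. omega_m u (f u))" by (rule cont_omega_m[OF cf])
  have wb: "-1 < omega_m u (f u) \<and> omega_m u (f u) < 1" if "u \<in> {s..t}" for u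
    using nu_bounds[OF R[OF that]] reg_basic[OF R[OF that]] unfolding omega_m_nu by auto
  have e1: "(\<lambda>u. fst (W_m (u, f u))) = (\<lambda>u. (1 + omega_m u (f u))/(1 - omega_m u (f u)) * u)"
    by (simp add: W_m_def)
  have e2: "(\<lambda>u. snd (W_m (u, f u))) = (\<lambda>u. \<bar>omega_m u (f u)\<bar>/(1 + omega_m u (f u)) * f u)"
    by (simp add: W_m_def)
  show "continuous_on {s..t} (\<lambda>u. fst (W_m (u, f u)))" unfolding e1
    by (intro continuous_intros co) (use wb in force)
  show "continuous_on {s..t} (\<lambda>u. snd (W_m (u, f u)))" unfolding e2
    by (intro continuous_intros co cf) (use wb in force)
qed

lemma case_mu: "arc_claim W_m (1/1000) (upper_half (1/10000)) line_x2 (faceNE (1/10000)) (faceNW (1/10000)) (faceNE (1/10000))"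
  unfolding arc_claim_def
proof (intro allI impI)
  fix f s t
  assume A: "flat_arc (1/1000) (upper_half (1/10000)) f s t \<and> (s, f s) \<in> line_x2 \<and> (t, f t) \<in> faceNE (1/10000)"
  note S = arc_setup[OF conjunct1[OF A]]
  have s2: "s = 2" using A unfolding line_x2_def by auto
  have ft: "f t = (t - 2)/10" "0 < f t" "f t \<le> 1/10000" using A unfolding faceNE_def by auto
  have sI: "s \<in> {s..t}" and tI: "t \<in> {s..t}" using S(1) by auto
  have fb: "99/100 * f t \<le> f u \<and> f u \<le> 101/100 * f t" if "u \<in> {s..t}" for u
  proof -
    have "\<bar>f u - f t\<bar> \<le> 1/1000*\<bar>u - t\<bar>" using S(4)[OF tI that] .
    moreover have "\<bar>u - t\<bar> \<le> 10 * f t" using that s2 ft by auto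
    ultimately have "\<bar>f u - f t\<bar> \<le> 1/100 * f t" using lin2 by blast
    then show ?thesis unfolding abs_le_iff by linarith
  qed
  define \<phi> where "\<phi> u = fst (W_m (u, f u))" for u
  define \<psi> where "\<psi> u = snd (W_m (u, f u))" for u
  show "\<exists>g c d. flat_arc (1/1000) (upper_half (1/10000)) g c d \<and> (c, g c) \<in> faceNW (1/10000) \<and> (d, g d) \<in> faceNE (1/10000) \<and>
        graph_on g {c..d} \<subseteq> W_m ` graph_on f {s..t} \<and>
        (\<forall>p\<in>graph_on g {c..d}. \<forall>q\<in>graph_on f {s..t}. \<bar>snd p\<bar> < \<bar>snd q\<bar> / 4) \<and>
        (\<forall>x1 x2. x1 \<in> {s..t} \<and> x2 \<in> {s..t} \<and> W_m (x1, f x1) = (c, g c) \<and> W_m (x2, f x2) = (d, g d) \<longrightarrow>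
           (\<forall>x D. min x1 x2 < x \<and> x < max x1 x2 \<and>
                  ((\<lambda>u. fst (W_m (u, f u))) has_real_derivative D) (at x) \<longrightarrow> D > 1))"
  proof (rule arc_core[where \<phi>=\<phi> and \<psi>=\<psi> and m="101/100"])
    show "s \<le> t" by (rule S(1))
    show "continuous_on {s..t} \<phi>" unfolding \<phi>_def using cont_Wm[OF S(2) S(3)] by simp
    show "continuous_on {s..t} \<psi>" unfolding \<psi>_def using cont_Wm[OF S(2) S(3)] by simp
    show "1 < (101/100::real)" by simp
    show "0 < (1/1000::real)" "(1/1000::real) < 1/10" by auto
    show "\<And>u. W_m (u, f u) = (\<phi> u, \<psi> u)" unfolding \<phi>_def \<psi>_def by simp
    fix u v assume uv: "s \<le> u" "u < v" "v \<le> t"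
    have uI: "u \<in> {s..t}" and vI: "v \<in> {s..t}" using uv by auto
    have yl: "\<bar>f v - f u\<bar> \<le> 1/1000*(v-u)" using S(4)[OF uI vI] uv by simp
    note pp = m_pair[OF S(3)[OF uI] S(3)[OF vI] uv(2) yl]
    show "(101/100)*(v-u) \<le> \<phi> v - \<phi> u" using pp(1) unfolding \<phi>_def .
    show "\<bar>\<psi> v - \<psi> u\<bar> \<le> 1/1000*(\<phi> v - \<phi> u)" using pp(2) unfolding \<phi>_def \<psi>_def .
  next
    have "0 < f s" "f s \<le> 1/10000" using S(3)[OF sI] unfolding reg_def by auto
    then show "\<phi> s + 10*\<psi> s \<le> 2" unfolding \<phi>_def \<psi>_def s2 using m_left_end[of "f 2"] s2 by simp
  next
    have "t = 2 + 10 * f t" using ft by simp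
    then show "\<phi> t - 10*\<psi> t \<ge> 2" unfolding \<phi>_def \<psi>_def by (rule m_right_end[OF ft(2) ft(3)])
  next
    fix u assume uI: "u \<in> {s..t}"
    note R = S(3)[OF uI]
    have ps: "0 < \<psi> u" "\<psi> u \<le> 14*(f u)^2" using m_psi[OF R] unfolding \<psi>_def by auto
    have "(f u)^2 \<le> (101/100 * f t)^2" using fb[OF uI] R unfolding reg_def by (intro power_mono) auto
    also have "\<dots> = (10201/10000) * f t * f t" by (simp add: power2_eq_square)
    also have "\<dots> \<le> (10201/10000) * f t * (1/10000)" using ft by (intro mult_left_mono) auto
    finally have fu2: "(f u)^2 \<le> (10201/100000000) * f t" by simp
    show "0 < \<psi> u \<and> \<psi> u \<le> 1/10000" using ps fu2 ft by linarith
    fix v assume vI: "v \<in> {s..t}"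
    have "f v \<ge> 99/100 * f t" using fb[OF vI] by simp
    then show "\<psi> u < \<bar>f v\<bar>/4" using ps fu2 ft by linarith
  qed
qed

theorem lemma5p3:
  shows "\<exists>a L. 0 < a \<and> a \<le> 1/10 \<and> 0 < L \<and> L < 1/6 \<and>
    arc_claim W_p L (upper_half a) (faceNW a) line_x2 (faceNW a) (faceNE a) \<and>
    arc_claim W_m L (upper_half a) line_x2 (faceNE a) (faceNW a) (faceNE a) \<and>
    arc_claim W_p L (lower_half a) (faceSW a) line_x2 (faceSW a) (faceSE a) \<and>
    arc_claim W_m L (lower_half a) line_x2 (faceSE a) (faceSW a) (faceSE a)"
proof (intro exI conjI)
  show "0 < (1/10000::real)" "(1/10000::real) \<le> 1/10" "0 < (1/1000::real)" "(1/1000::real) < 1/6" by auto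
  show "arc_claim W_p (1/1000) (upper_half (1/10000)) (faceNW (1/10000)) line_x2 (faceNW (1/10000)) (faceNE (1/10000))"
    by (rule case_pu)
  show "arc_claim W_m (1/1000) (upper_half (1/10000)) line_x2 (faceNE (1/10000)) (faceNW (1/10000)) (faceNE (1/10000))"
    by (rule case_mu)
  show "arc_claim W_p (1/1000) (lower_half (1/10000)) (faceSW (1/10000)) line_x2 (faceSW (1/10000)) (faceSE (1/10000))"
    by (rule refl_claim[OF W_p_refl case_pu]) (auto intro: faces_refl)
  show "arc_claim W_m (1/1000) (lower_half (1/10000)) line_x2 (faceSE (1/10000)) (faceSW (1/10000)) (faceSE (1/10000))"
    by (rule refl_claim[OF W_m_refl case_mu]) (auto intro: faces_refl)
qed


end
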